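(* Let $f,g$ be real-valued measurable functions on $[0,1]$, integrable over $[0,x]$ for every $x<1$, such that $V_f,V_g\in\mathcal A_V$. Then $V_fV_g=V_{f*g}=0$ if and only if there exists $\alpha\in[0,1]$ such that $f=0$ a.e. on $[0,\alpha]$ and $g=0$ a.e. on $[0,1-\alpha]$.
   Context: $V$ is the Volterra operator on $L^2[0,1]$, $V\xi(x)=\int_0^x\xi(t)\,dt$, and $\mathcal A_V$ is the operator-norm closure in $\mathcal B(L^2[0,1])$ of the polynomials $p(V)$ with $p(0)=0$. For a measurable $f$ on $[0,1]$ integrable over $[0,x]$ for each $x<1$, $V_f$ is the operator $V_f\rho(x)=\int_0^xf(x-t)\rho(t)\,dt$; "$V_f\in\mathcal A_V$" means this defines a bounded operator on $L^2[0,1]$ belonging to $\mathcal A_V$. The convolution is $f*g(x)=\int_0^xf(x-t)g(t)\,dt$. *)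

theory Defs
  imports "HOL-Analysis.Analysis"
begin

definition L2 :: "(real \<Rightarrow> complex) \<Rightarrow> bool" where
  "L2 \<rho> \<longleftrightarrow> \<rho> \<in> borel_measurable (lebesgue_on {0..1}) \<and>
     integrable (lebesgue_on {0..1}) (\<lambda>x. (cmod (\<rho> x))\<^sup>2)"

definition L2norm :: "(real \<Rightarrow> complex) \<Rightarrow> real" where
  "L2norm \<rho> = sqrt (integral\<^sup>L (lebesgue_on {0..1}) (\<lambda>x. (cmod (\<rho> x))\<^sup>2))"

definition Vop :: "(real \<Rightarrow> real) \<Rightarrow> (real \<Rightarrow> complex) \<Rightarrow> real \<Rightarrow> complex" where
  "Vop f \<rho> x = integral\<^sup>L (lebesgue_on {0..x}) (\<lambda>t. complex_of_real (f (x - t)) * \<rho> t)"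

definition volterra :: "(real \<Rightarrow> complex) \<Rightarrow> real \<Rightarrow> complex" where
  "volterra = Vop (\<lambda>_. 1)"

text \<open>p(V) for p(z) = sum_{k=1}^n c_k z^k (so p(0) = 0).\<close>
definition polyV :: "(nat \<Rightarrow> complex) \<Rightarrow> nat \<Rightarrow> (real \<Rightarrow> complex) \<Rightarrow> real \<Rightarrow> complex" where
  "polyV c n \<rho> = (\<lambda>x. \<Sum>k\<in>{1..n}. c k * (volterra ^^ k) \<rho> x)"

text \<open>V_f defines a bounded operator on L2[0,1] lying in the operator-norm closure A_V
  of the polynomials p(V) with p(0)=0.\<close>
definition in_AV :: "(real \<Rightarrow> real) \<Rightarrow> bool" where
  "in_AV f \<longleftrightarrow>
     (\<forall>\<rho>. L2 \<rho> \<longrightarrow> (AE x in lebesgue_on {0..1}.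
        integrable (lebesgue_on {0..x}) (\<lambda>t. complex_of_real (f (x - t)) * \<rho> t))) \<and>
     (\<forall>\<epsilon>>0. \<exists>c n. \<forall>\<rho>. L2 \<rho> \<longrightarrow>
        L2 (\<lambda>x. Vop f \<rho> x - polyV c n \<rho> x) \<and>
        L2norm (\<lambda>x. Vop f \<rho> x - polyV c n \<rho> x) \<le> \<epsilon> * L2norm \<rho>)"

definition op_zero :: "((real \<Rightarrow> complex) \<Rightarrow> real \<Rightarrow> complex) \<Rightarrow> bool" where
  "op_zero T \<longleftrightarrow> (\<forall>\<rho>. L2 \<rho> \<longrightarrow> (AE x in lebesgue_on {0..1}. T \<rho> x = 0))"

definition conv :: "(real \<Rightarrow> real) \<Rightarrow> (real \<Rightarrow> real) \<Rightarrow> real \<Rightarrow> real" where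
  "conv f g x = integral\<^sup>L (lebesgue_on {0..x}) (\<lambda>t. f (x - t) * g t)"

end

theory Submission
  imports Defs "HOL-Real_Asymp.Real_Asymp"
begin


lemma lebesgue_on_Icc_lborel:
  fixes \<phi> :: "real \<Rightarrow> real"
  assumes "\<phi> \<in> borel_measurable borel"
  shows "integral\<^sup>L (lebesgue_on {a..b}) \<phi> = (\<integral>t. indicator {a..b} t * \<phi> t \<partial>lborel)"
proof -
  have "integral\<^sup>L (lebesgue_on {a..b}) \<phi> = (\<integral>t. indicator {a..b} t * \<phi> t \<partial>lebesgue)"
    by (subst integral_restrict_space) auto
  also have "\<dots> = (\<integral>t. indicator {a..b} t * \<phi> t \<partial>lborel)"
    using assms by (intro integral_completion) auto
  finally show ?thesis .
qed

lemma tri_swap_gen: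
  fixes k :: "real \<Rightarrow> real \<Rightarrow> real" and c :: real
  defines "D \<equiv> {(s,t). 0 \<le> t \<and> t \<le> s \<and> s \<le> c}"
  assumes meas: "(\<lambda>(s,t). k s t) \<in> borel_measurable borel"
    and int: "integrable lborel (\<lambda>(s,t). indicator D (s,t) * k s t)"
  shows "integral\<^sup>L (lebesgue_on {0..c}) (\<lambda>s. integral\<^sup>L (lebesgue_on {0..s}) (\<lambda>t. k s t))
       = integral\<^sup>L (lebesgue_on {0..c}) (\<lambda>t. integral\<^sup>L (lebesgue_on {t..c}) (\<lambda>s. k s t))"
proof -
  have measD: "D \<in> sets borel" unfolding D_def
    by (intro borel_closed) (auto intro!: closed_Collect_conj closed_Collect_le continuous_intros simp: case_prod_unfold)
  have mk[measurable]: "(\<lambda>x. k (fst x) (snd x)) \<in> borel_measurable (lborel \<Otimes>\<^sub>M lborel)"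
    using meas by (simp add: lborel_prod case_prod_unfold measurable_lborel1)
  have int2: "integrable (lborel \<Otimes>\<^sub>M lborel) (\<lambda>(s,t). indicator D (s,t) * k s t)"
    using int by (simp add: lborel_prod)
  have ks: "k s \<in> borel_measurable borel" for s
    using measurable_Pair2[OF mk, of s] by (simp add: measurable_lborel1)
  have kt: "(\<lambda>s. k s t) \<in> borel_measurable borel" for t
    using measurable_Pair1[OF mk, of t] by (simp add: measurable_lborel1)
  have ind1: "indicator D (s,t) = (indicator {0..c} s * indicator {0..s} t :: real)" for s t
    by (auto simp: D_def indicator_def)
  have ind2: "indicator D (s,t) = (indicator {0..c} t * indicator {t..c} s :: real)" for s t
    by (auto simp: D_def indicator_def)
  have "integral\<^sup>L (lebesgue_on {0..c}) (\<lambda>s. integral\<^sup>L (lebesgue_on {0..s}) (\<lambda>t. k s t))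
     = integral\<^sup>L (lebesgue_on {0..c}) (\<lambda>s. \<integral>t. indicator {0..s} t * k s t \<partial>lborel)"
    using ks by (simp add: lebesgue_on_Icc_lborel)
  also have "\<dots> = (\<integral>s. indicator {0..c} s * (\<integral>t. indicator {0..s} t * k s t \<partial>lborel) \<partial>lborel)"
  proof (rule lebesgue_on_Icc_lborel)
    have c1: "closed {p::real\<times>real. 0 \<le> snd p \<and> snd p \<le> fst p}"
      by (auto intro!: closed_Collect_conj closed_Collect_le continuous_intros)
    have "(\<lambda>p. indicator {p::real\<times>real. 0 \<le> snd p \<and> snd p \<le> fst p} p * k (fst p) (snd p)) \<in> borel_measurable borel"
      using meas c1 by (intro borel_measurable_times borel_measurable_indicator) (auto simp: case_prod_unfold)
    then have "case_prod (\<lambda>s t. indicator {0..s} t * k s t) \<in> borel_measurable (lborel \<Otimes>\<^sub>M lborel)"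
      by (simp add: lborel_prod case_prod_unfold indicator_def)
    then have "(\<lambda>s. \<integral>t. indicator {0..s} t * k s t \<partial>lborel) \<in> borel_measurable lborel"
      by (rule lborel.borel_measurable_lebesgue_integral)
    then show "(\<lambda>s. \<integral>t. indicator {0..s} t * k s t \<partial>lborel) \<in> borel_measurable borel"
      by (simp add: measurable_lborel1)
  qed
  also have "\<dots> = (\<integral>s. \<integral>t. indicator D (s,t) * k s t \<partial>lborel \<partial>lborel)"
    by (simp add: ind1 mult.assoc)
  also have "\<dots> = (\<integral>t. \<integral>s. indicator D (s,t) * k s t \<partial>lborel \<partial>lborel)"
    using lborel_pair.Fubini_integral[of "\<lambda>s t. indicator D (s,t) * k s t"] int2
    by (simp add: case_prod_unfold)
  also have "\<dots> = (\<integral>t. indicator {0..c} t * (\<integral>s. indicator {t..c} s * k s t \<partial>lborel) \<partial>lborel)"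
    by (simp add: ind2 mult.assoc)
  also have "\<dots> = integral\<^sup>L (lebesgue_on {0..c}) (\<lambda>t. \<integral>s. indicator {t..c} s * k s t \<partial>lborel)"
  proof (rule lebesgue_on_Icc_lborel[symmetric])
    have c1: "closed {p::real\<times>real. fst p \<le> snd p \<and> snd p \<le> c}"
      by (auto intro!: closed_Collect_conj closed_Collect_le continuous_intros)
    have "(\<lambda>p. indicator {p::real\<times>real. fst p \<le> snd p \<and> snd p \<le> c} p * k (snd p) (fst p)) \<in> borel_measurable borel"
    proof (intro borel_measurable_times borel_measurable_indicator)
      have sw: "(\<lambda>x::real\<times>real. (snd x, fst x)) \<in> borel_measurable borel"
        by (intro borel_measurable_continuous_onI continuous_intros)
      from measurable_compose[OF sw meas]
      show "(\<lambda>p. k (snd p) (fst p)) \<in> borel_measurable borel" by (simp add: case_prod_unfold)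
    qed (use c1 in auto)
    then have "case_prod (\<lambda>t s. indicator {t..c} s * k s t) \<in> borel_measurable (lborel \<Otimes>\<^sub>M lborel)"
      by (simp add: lborel_prod case_prod_unfold indicator_def)
    then have "(\<lambda>t. \<integral>s. indicator {t..c} s * k s t \<partial>lborel) \<in> borel_measurable lborel"
      by (rule lborel.borel_measurable_lebesgue_integral)
    then show "(\<lambda>t. \<integral>s. indicator {t..c} s * k s t \<partial>lborel) \<in> borel_measurable borel"
      by (simp add: measurable_lborel1)
  qed
  also have "\<dots> = integral\<^sup>L (lebesgue_on {0..c}) (\<lambda>t. integral\<^sup>L (lebesgue_on {t..c}) (\<lambda>s. k s t))"
    using kt by (simp add: lebesgue_on_Icc_lborel)
  finally show ?thesis .
qed


lemma int_lebesgue_on_eq: "integral\<^sup>L (lebesgue_on {a..b}) (\<phi>::real\<Rightarrow>real) = (\<integral>x. indicator {a..b} x * \<phi> x \<partial>lebesgue)"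
  by (subst integral_restrict_space) auto

lemma int_reflect:
  fixes \<phi> :: "real \<Rightarrow> real"
  shows "integral\<^sup>L (lebesgue_on {0..s}) \<phi> = integral\<^sup>L (lebesgue_on {0..s}) (\<lambda>x. \<phi> (s - x))"
proof -
  have "integral\<^sup>L (lebesgue_on {0..s}) \<phi> = \<bar>-1\<bar> *\<^sub>R (\<integral>x. indicator {0..s} (s + -1 * x) * \<phi> (s + -1*x) \<partial>lebesgue)"
    unfolding int_lebesgue_on_eq by (rule lebesgue_integral_real_affine) simp
  also have "\<dots> = (\<integral>x. indicator {0..s} x * \<phi> (s - x) \<partial>lebesgue)"
    by simp (intro Bochner_Integration.integral_cong, auto simp: indicator_def)
  finally show ?thesis unfolding int_lebesgue_on_eq .
qed

lemma int_shift:
  fixes \<phi> :: "real \<Rightarrow> real"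
  shows "integral\<^sup>L (lebesgue_on {a..b}) \<phi> = integral\<^sup>L (lebesgue_on {a-d..b-d}) (\<lambda>x. \<phi> (x + d))"
proof -
  have "integral\<^sup>L (lebesgue_on {a..b}) \<phi> = \<bar>1\<bar> *\<^sub>R (\<integral>x. indicator {a..b} (d + 1 * x) * \<phi> (d + 1*x) \<partial>lebesgue)"
    unfolding int_lebesgue_on_eq by (rule lebesgue_integral_real_affine) simp
  also have "\<dots> = (\<integral>x. indicator {a-d..b-d} x * \<phi> (x + d) \<partial>lebesgue)"
    by simp (intro Bochner_Integration.integral_cong, auto simp: indicator_def add.commute)
  finally show ?thesis unfolding int_lebesgue_on_eq .
qed

lemma int_scale:
  fixes \<phi> :: "real \<Rightarrow> real"
  assumes "s > 0"
  shows "integral\<^sup>L (lebesgue_on {0..s}) \<phi> = s * integral\<^sup>L (lebesgue_on {0..1}) (\<lambda>w. \<phi> (s * w))"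
proof -
  have "integral\<^sup>L (lebesgue_on {0..s}) \<phi> = \<bar>s\<bar> *\<^sub>R (\<integral>x. indicator {0..s} (0 + s * x) * \<phi> (0 + s*x) \<partial>lebesgue)"
    unfolding int_lebesgue_on_eq by (rule lebesgue_integral_real_affine) (use assms in simp)
  also have "\<dots> = s * (\<integral>x. indicator {0..1} x * \<phi> (s * x) \<partial>lebesgue)"
    using assms by (auto intro!: integral_cong arg_cong2[where f="(*)"] simp: indicator_def zero_le_mult_iff mult_le_cancel_left1)
  finally show ?thesis unfolding int_lebesgue_on_eq .
qed

lemma int_lebesgue_on_empty: "b < a \<Longrightarrow> integral\<^sup>L (lebesgue_on {a..b}) (\<phi>::real\<Rightarrow>real) = 0"
  by (rule Bochner_Integration.integral_empty) simp

lemma int_lebesgue_on_sub: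
  fixes \<phi> :: "real \<Rightarrow> real"
  assumes "a \<le> c" "d \<le> b"
  shows "integral\<^sup>L (lebesgue_on {a..b}) (\<lambda>x. indicator {c..d} x * \<phi> x) = integral\<^sup>L (lebesgue_on {c..d}) \<phi>"
  unfolding int_lebesgue_on_eq
  by (intro Bochner_Integration.integral_cong) (use assms in \<open>auto simp: indicator_def\<close>)

lemma int_lebesgue_on_point: "integral\<^sup>L (lebesgue_on {a..a}) (\<phi>::real\<Rightarrow>real) = 0"
proof -
  have "AE x in lebesgue. indicator {a..a} x * \<phi> x = 0"
    using AE_completion[OF AE_lborel_singleton[of a]] by eventually_elim auto
  then show ?thesis unfolding int_lebesgue_on_eq by (rule integral_eq_zero_AE)
qed

lemma Lint_zero: "(\<And>x. x \<in> {a..b} \<Longrightarrow> \<phi> x = 0) \<Longrightarrow> integral\<^sup>L (lebesgue_on {a..b}) (\<phi>::real\<Rightarrow>real) = 0"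
  by (rule trans[OF Bochner_Integration.integral_cong[where g="\<lambda>_. 0"]]) auto

lemma cont_comp: "continuous_on UNIV F \<Longrightarrow> continuous_on S h \<Longrightarrow> continuous_on S (\<lambda>x. F (h x))"
  by (rule continuous_on_compose2[OF _ _ subset_UNIV])

lemma conv_integrable:
  fixes F G :: "real \<Rightarrow> real"
  assumes "continuous_on UNIV F" "continuous_on UNIV G"
  shows "integrable (lebesgue_on {a..b}) (\<lambda>x. F (s - x) * G x)"
  by (intro continuous_imp_integrable_real continuous_intros cont_comp[OF assms(1)] assms(2)[THEN continuous_on_subset]) auto

lemma conv_neg: "s < 0 \<Longrightarrow> conv F G s = 0"
  unfolding conv_def by (rule int_lebesgue_on_empty) simp

lemma conv_cong:
  assumes "\<And>x. x \<in> {0..s} \<Longrightarrow> F x = F' x" "\<And>x. x \<in> {0..s} \<Longrightarrow> G x = G' x"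
  shows "conv F G s = conv F' G' s"
  unfolding conv_def using assms by (intro Bochner_Integration.integral_cong) auto

lemma conv_comm: "conv F G s = conv G F s"
  unfolding conv_def by (subst int_reflect) (simp add: mult.commute)

lemma conv_zero:
  assumes "\<And>x. x \<in> {0..a} \<Longrightarrow> F x = 0" "\<And>x. x \<in> {0..b} \<Longrightarrow> G x = 0" "s \<le> a + b"
  shows "conv F G s = 0"
proof -
  have *: "F (s - x) * G x = 0" if "x \<in> {0..s}" for x
  proof (cases "x \<le> b")
    case True then show ?thesis using assms(2) that by auto
  next
    case False then show ?thesis using assms(1,3) that by auto
  qed
  show ?thesis unfolding conv_def
    by (rule Lint_zero) (rule *)
qed

lemma conv_continuous:
  assumes F: "continuous_on UNIV F" and G: "continuous_on UNIV G"
  shows "continuous_on UNIV (conv F G)"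
proof -
  define m where "m s = max s 0" for s :: real
  define \<Phi> where "\<Phi> s = m s * integral {0..1} (\<lambda>w. F (m s - m s * w) * G (m s * w))" for s
  have cm: "continuous_on UNIV m" unfolding m_def by (intro continuous_intros)
  have "continuous_on UNIV (\<lambda>s. integral (cbox 0 1) (\<lambda>w. F (m s - m s * w) * G (m s * w)))"
    apply (rule integral_continuous_on_param)
    apply (simp add: case_prod_unfold)
    by (intro continuous_intros cont_comp[OF F] cont_comp[OF G] cont_comp[OF cm])
  then have c\<Phi>: "continuous_on UNIV \<Phi>" unfolding \<Phi>_def
    by (intro continuous_intros cm) auto
  have "conv F G s = \<Phi> s" for s
  proof (cases "s > 0")
    case True
    have "conv F G s = s * integral\<^sup>L (lebesgue_on {0..1}) (\<lambda>w. F (s - s * w) * G (s * w))"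
      unfolding conv_def by (subst int_scale[OF True]) simp
    also have "\<dots> = s * integral {0..1} (\<lambda>w. F (s - s * w) * G (s * w))"
      by (subst lebesgue_integral_eq_integral)
        (auto intro!: continuous_imp_integrable_real continuous_intros cont_comp[OF F] cont_comp[OF G])
    finally show ?thesis using True by (simp add: \<Phi>_def m_def)
  next
    case False
    then show ?thesis
      using int_lebesgue_on_point[of 0] by (cases "s = 0") (auto simp: \<Phi>_def m_def conv_neg conv_def)
  qed
  then have "conv F G = \<Phi>" by auto
  then show ?thesis using c\<Phi> by simp
qed


lemma tri_swap_cont:
  fixes k :: "real \<Rightarrow> real \<Rightarrow> real" and c :: real
  assumes cont: "continuous_on UNIV (\<lambda>p. k (fst p) (snd p))"
  shows "integral\<^sup>L (lebesgue_on {0..c}) (\<lambda>s. integral\<^sup>L (lebesgue_on {0..s}) (\<lambda>t. k s t))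
       = integral\<^sup>L (lebesgue_on {0..c}) (\<lambda>t. integral\<^sup>L (lebesgue_on {t..c}) (\<lambda>s. k s t))"
proof (rule tri_swap_gen)
  show "(\<lambda>(s,t). k s t) \<in> borel_measurable borel"
    using cont by (simp add: case_prod_unfold borel_measurable_continuous_onI)
  define D where "D = {(s,t). 0 \<le> t \<and> t \<le> s \<and> s \<le> c}"
  have "closed D" unfolding D_def
    by (auto intro!: closed_Collect_conj closed_Collect_le continuous_intros simp: case_prod_unfold)
  moreover have "bounded D"
    by (rule bounded_subset[OF bounded_cbox[of "(0,0)" "(c,c)"]])
       (auto simp: D_def cbox_def Basis_prod_def inner_prod_def)
  ultimately have "compact D" by (simp add: compact_eq_bounded_closed)
  from borel_integrable_compact[OF this continuous_on_subset[OF cont subset_UNIV]]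
  show "integrable lborel (\<lambda>(s,t). indicator {(s,t). 0 \<le> t \<and> t \<le> s \<and> s \<le> c} (s,t) * k s t)"
    by (simp add: D_def case_prod_unfold)
qed

lemma conv_R:
  fixes F G H :: "real \<Rightarrow> real"
  assumes F: "continuous_on UNIV F" and G: "continuous_on UNIV G" and H: "continuous_on UNIV H"
  shows "conv (conv F G) H s = conv (conv F H) G s"
proof (cases "s < 0")
  case True then show ?thesis by (simp add: conv_neg)
next
  case False
  have "conv (conv F G) H s = integral\<^sup>L (lebesgue_on {0..s}) (\<lambda>u. conv F G u * H (s - u))"
    unfolding conv_def[of "conv F G"] by (subst int_reflect) simp
  also have "\<dots> = integral\<^sup>L (lebesgue_on {0..s}) (\<lambda>u. integral\<^sup>L (lebesgue_on {0..u}) (\<lambda>t. F (u - t) * G t * H (s - u)))"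
    unfolding conv_def by simp
  also have "\<dots> = integral\<^sup>L (lebesgue_on {0..s}) (\<lambda>t. integral\<^sup>L (lebesgue_on {t..s}) (\<lambda>u. F (u - t) * G t * H (s - u)))"
    by (rule tri_swap_cont)
      (intro continuous_intros cont_comp[OF F] cont_comp[OF G] cont_comp[OF H])
  also have "\<dots> = integral\<^sup>L (lebesgue_on {0..s}) (\<lambda>t. conv F H (s - t) * G t)"
  proof (intro Bochner_Integration.integral_cong refl)
    fix t
    have "integral\<^sup>L (lebesgue_on {t..s}) (\<lambda>u. F (u - t) * G t * H (s - u))
        = integral\<^sup>L (lebesgue_on {0..s-t}) (\<lambda>x. F x * H (s - t - x) * G t)"
      by (subst int_shift[of _ _ _ t]) (simp add: algebra_simps)
    also have "\<dots> = conv H F (s - t) * G t"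
      unfolding conv_def by (simp add: mult.commute)
    finally show "integral\<^sup>L (lebesgue_on {t..s}) (\<lambda>u. F (u - t) * G t * H (s - u)) = conv F H (s - t) * G t"
      by (simp add: conv_comm)
  qed
  also have "\<dots> = conv (conv F H) G s" unfolding conv_def[of "conv F H"] ..
  finally show ?thesis .
qed

lemma conv_assoc:
  fixes F G H :: "real \<Rightarrow> real"
  assumes F: "continuous_on UNIV F" and G: "continuous_on UNIV G" and H: "continuous_on UNIV H"
  shows "conv F (conv G H) s = conv (conv F G) H s"
proof -
  have "conv F (conv G H) s = conv (conv G H) F s" by (rule conv_comm)
  also have "\<dots> = conv (conv G F) H s" by (rule conv_R[OF G H F])
  also have "\<dots> = conv (conv F G) H s" by (rule conv_cong) (auto simp: conv_comm)
  finally show ?thesis .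
qed

lemma conv_add_right:
  fixes F G1 G2 :: "real \<Rightarrow> real"
  assumes F: "continuous_on UNIV F" and "continuous_on UNIV G1" "continuous_on UNIV G2"
  shows "conv F (\<lambda>x. G1 x + G2 x) s = conv F G1 s + conv F G2 s"
  unfolding conv_def using conv_integrable[OF F assms(2)] conv_integrable[OF F assms(3)]
  by (simp add: distrib_left)

lemma conv_cmult_right: "conv F (\<lambda>x. c * G x) s = c * conv F G s"
  unfolding conv_def by (simp add: algebra_simps)

lemma conv_cmult_left: "conv (\<lambda>x. c * F x) G s = c * conv F G s"
  unfolding conv_def by (simp add: algebra_simps)

lemma conv_sum_right:
  fixes F :: "real \<Rightarrow> real" and H :: "'i \<Rightarrow> real \<Rightarrow> real"
  assumes F: "continuous_on UNIV F" and "finite I" and H: "\<And>i. i \<in> I \<Longrightarrow> continuous_on UNIV (H i)"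
  shows "conv F (\<lambda>x. \<Sum>i\<in>I. H i x) s = (\<Sum>i\<in>I. conv F (H i) s)"
  unfolding conv_def using conv_integrable[OF F H]
  by (simp add: sum_distrib_left \<open>finite I\<close>)

lemma conv_shift:
  fixes F G :: "real \<Rightarrow> real"
  assumes "a \<ge> 0" "b \<ge> 0" "s \<ge> 0"
    and F0: "\<And>x. 0 \<le> x \<Longrightarrow> x < a \<Longrightarrow> F x = 0" and G0: "\<And>x. 0 \<le> x \<Longrightarrow> x < b \<Longrightarrow> G x = 0"
  shows "conv F G (s + a + b) = conv (\<lambda>x. F (x + a)) (\<lambda>x. G (x + b)) s"
proof -
  have "conv F G (s + a + b) = integral\<^sup>L (lebesgue_on {0..s+a+b}) (\<lambda>x. indicator {b..s+b} x * (F (s + a + b - x) * G x))"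
    unfolding conv_def
  proof (intro Bochner_Integration.integral_cong refl)
    fix x assume "x \<in> space (lebesgue_on {0..s + a + b})"
    then have x: "0 \<le> x" "x \<le> s + a + b" by auto
    show "F (s + a + b - x) * G x = indicator {b..s+b} x * (F (s + a + b - x) * G x)"
    proof (cases "x \<in> {b..s+b}")
      case False
      then have "x < b \<or> x > s + b" by auto
      then show ?thesis using F0[of "s + a + b - x"] G0[of x] x by (auto simp: indicator_def)
    qed simp
  qed
  also have "\<dots> = integral\<^sup>L (lebesgue_on {b..s+b}) (\<lambda>x. F (s + a + b - x) * G x)"
    by (rule int_lebesgue_on_sub) (use assms in auto)
  also have "\<dots> = integral\<^sup>L (lebesgue_on {0..s}) (\<lambda>x. F (s - x + a) * G (x + b))"
    by (subst int_shift[of _ _ _ b]) (simp add: algebra_simps)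
  also have "\<dots> = conv (\<lambda>x. F (x + a)) (\<lambda>x. G (x + b)) s"
    unfolding conv_def ..
  finally show ?thesis .
qed


lemma cont_integrable_on:
  fixes h :: "real \<Rightarrow> real"
  shows "continuous_on UNIV h \<Longrightarrow> integrable (lebesgue_on {a..b}) h"
  by (metis continuous_imp_integrable_real continuous_on_subset subset_UNIV)

lemma cont_measurable_on:
  fixes h :: "real \<Rightarrow> real"
  shows "continuous_on UNIV h \<Longrightarrow> h \<in> borel_measurable (lebesgue_on {a..b})"
  by (rule borel_measurable_integrable[OF cont_integrable_on])

lemma AE_on_neq: "AE x in lebesgue_on {a..b}. x \<noteq> (u::real) \<and> x \<in> {a..b}"
proof -
  have "AE x in lebesgue. x \<noteq> u" by (rule AE_completion[OF AE_lborel_singleton])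
  then show ?thesis by (subst AE_restrict_space_iff) (auto elim: eventually_mono)
qed

lemma exp_sums_Suc: "(\<lambda>k. w ^ Suc k / fact (Suc k)) sums (exp w - 1)" for w :: real
proof -
  have "(\<lambda>k. w^k /\<^sub>R fact k) sums exp w" by (rule exp_converges)
  then have "(\<lambda>k. w^(Suc k) /\<^sub>R fact (Suc k)) sums (exp w - 1)"
    by (subst sums_Suc_iff) simp
  then show ?thesis by (simp add: divide_inverse_commute)
qed

lemma lemma1_step:
  fixes h :: "real \<Rightarrow> real"
  assumes h: "continuous_on UNIV h"
    and bnd: "\<And>n::nat. \<bar>integral\<^sup>L (lebesgue_on {0..a}) (\<lambda>t. exp (real n * t) * h t)\<bar> \<le> M"
    and u: "0 < u" "u < a"
  shows "integral\<^sup>L (lebesgue_on {u..a}) h = 0"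
proof -
  define s where "s n t = (1 - exp (- exp (real n * (t - u)))) * h t" for n :: nat and t
  define f where "f t = indicator {u..a} t * h t" for t
  have cs: "continuous_on UNIV (s n)" for n unfolding s_def by (intro continuous_intros h)
  have lim1: "(\<lambda>n. integral\<^sup>L (lebesgue_on {0..a}) (s n)) \<longlonglongrightarrow> integral\<^sup>L (lebesgue_on {0..a}) f"
  proof (rule integral_dominated_convergence[where w="\<lambda>t. \<bar>h t\<bar>"])
    show "f \<in> borel_measurable (lebesgue_on {0..a})" unfolding f_def
      by (intro borel_measurable_times cont_measurable_on[OF h] borel_measurable_indicator)
         (use u in \<open>auto simp: sets_restrict_space_iff\<close>)
    show "s n \<in> borel_measurable (lebesgue_on {0..a})" for n by (rule cont_measurable_on[OF cs])
    show "integrable (lebesgue_on {0..a}) (\<lambda>t. \<bar>h t\<bar>)"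
      by (intro cont_integrable_on continuous_intros h)
    show "AE t in lebesgue_on {0..a}. (\<lambda>n. s n t) \<longlonglongrightarrow> f t"
      using AE_on_neq[where u=u and a=0 and b=a]
    proof eventually_elim
      case (elim t)
      show ?case
      proof (cases "t < u")
        case True
        then have "(\<lambda>n::nat. 1 - exp (- exp (real n * (t - u)))) \<longlonglongrightarrow> 0" by real_asymp
        then have "(\<lambda>n. s n t) \<longlonglongrightarrow> 0 * h t" unfolding s_def by (intro tendsto_mult tendsto_const)
        then show ?thesis using True by (simp add: f_def)
      next
        case False
        then have "t > u" using elim by auto
        then have "(\<lambda>n::nat. 1 - exp (- exp (real n * (t - u)))) \<longlonglongrightarrow> 1" by real_asymp
        then have "(\<lambda>n. s n t) \<longlonglongrightarrow> 1 * h t" unfolding s_def by (intro tendsto_mult tendsto_const)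
        moreover have "f t = h t" using \<open>t > u\<close> elim by (simp add: f_def indicator_def)
        ultimately show ?thesis by simp
      qed
    qed
    show "AE t in lebesgue_on {0..a}. norm (s n t) \<le> \<bar>h t\<bar>" for n
    proof (rule AE_I2)
      fix t
      have "0 \<le> 1 - exp (- exp (real n * (t - u)))" by simp
      moreover have "1 - exp (- exp (real n * (t - u))) \<le> 1" by simp
      ultimately show "norm (s n t) \<le> \<bar>h t\<bar>" unfolding s_def
        by (simp add: abs_mult mult_left_le_one_le)
    qed
  qed
  have ser: "\<bar>integral\<^sup>L (lebesgue_on {0..a}) (s n)\<bar> \<le> M * (exp (exp (- (real n * u))) - 1)" for n
  proof -
    define y where "y t = exp (real n * (t - u))" for t
    define g where "g k t = - ((- y t) ^ Suc k / fact (Suc k)) * h t" for k t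
    define w where "w = exp (- (real n * u))"
    define c where "c k = - ((-1) ^ Suc k * w ^ Suc k / fact (Suc k))" for k :: nat
    define I where "I m = integral\<^sup>L (lebesgue_on {0..a}) (\<lambda>t. exp (real m * t) * h t)" for m :: nat
    define Z where "Z = exp (real n * (a - u))"
    define C where "C = integral\<^sup>L (lebesgue_on {0..a}) (\<lambda>t. \<bar>h t\<bar>)"
    have ypos: "y t > 0" for t unfolding y_def by simp
    have ypow: "y t ^ Suc k = exp (real (Suc k * n) * t) * w ^ Suc k" for k t
    proof -
      have "y t ^ Suc k = exp (real (Suc k) * (real n * (t - u)))"
        unfolding y_def by (rule exp_of_nat_mult[symmetric])
      also have "\<dots> = exp (real (Suc k * n) * t + real (Suc k) * (- (real n * u)))"
        by (simp add: algebra_simps)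
      also have "\<dots> = exp (real (Suc k * n) * t) * exp (real (Suc k) * (- (real n * u)))"
        by (rule exp_add)
      also have "\<dots> = exp (real (Suc k * n) * t) * w ^ Suc k"
        unfolding w_def by (simp only: exp_of_nat_mult)
      finally show ?thesis .
    qed
    have g_eq: "g k t = c k * (exp (real (Suc k * n) * t) * h t)" for k t
    proof -
      have "g k t = - (((-1)^Suc k * (exp (real (Suc k * n) * t) * w ^ Suc k)) / fact (Suc k)) * h t"
        unfolding g_def power_minus[of "y t"] ypow ..
      then show ?thesis unfolding c_def by (simp only: mult_ac divide_inverse minus_mult_left)
    qed
    have sums: "(\<lambda>k. g k t) sums s n t" for t
    proof -
      have "(\<lambda>k. (- y t) ^ Suc k / fact (Suc k)) sums (exp (- y t) - 1)" by (rule exp_sums_Suc)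
      then have "(\<lambda>k. (- y t) ^ Suc k / fact (Suc k) * (- h t)) sums ((exp (- y t) - 1) * (- h t))"
        by (rule sums_mult2)
      then show ?thesis unfolding g_def s_def y_def by (simp add: algebra_simps)
    qed
    have cy: "continuous_on UNIV y" unfolding y_def by (intro continuous_intros)
    have cg: "continuous_on UNIV (g k)" for k unfolding g_def by (intro continuous_intros cy h) auto
    have int_g: "integrable (lebesgue_on {0..a}) (g k)" for k by (rule cont_integrable_on[OF cg])
    have norm_g: "norm (g k t) = y t ^ Suc k / fact (Suc k) * \<bar>h t\<bar>" for k t
      unfolding g_def using ypos[of t] by (simp add: abs_mult power_abs)
    have "summable (\<lambda>k. norm (g k t))" for t
    proof -
      have "summable (\<lambda>k. y t ^ Suc k / fact (Suc k) * \<bar>h t\<bar>)"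
        by (rule summable_mult2) (rule sums_summable[OF exp_sums_Suc])
      then show ?thesis by (simp only: norm_g)
    qed
    then have sm1: "AE t in lebesgue_on {0..a}. summable (\<lambda>k. norm (g k t))" by simp
    have sm2: "summable (\<lambda>k. integral\<^sup>L (lebesgue_on {0..a}) (\<lambda>t. norm (g k t)))"
    proof (rule summable_comparison_test')
      show "summable (\<lambda>k. Z ^ Suc k / fact (Suc k) * C)"
        by (rule summable_mult2) (rule sums_summable[OF exp_sums_Suc])
      fix k :: nat
      have i1: "integrable (lebesgue_on {0..a}) (\<lambda>t. norm (g k t))" using int_g by auto
      have i2: "integrable (lebesgue_on {0..a}) (\<lambda>t. Z ^ Suc k / fact (Suc k) * \<bar>h t\<bar>)"
        by (intro integrable_mult_right cont_integrable_on continuous_intros h)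
      have "integral\<^sup>L (lebesgue_on {0..a}) (\<lambda>t. norm (g k t)) \<le>
            integral\<^sup>L (lebesgue_on {0..a}) (\<lambda>t. Z ^ Suc k / fact (Suc k) * \<bar>h t\<bar>)"
      proof (rule integral_mono[OF i1 i2])
        fix t assume "t \<in> space (lebesgue_on {0..a})"
        then have "t \<le> a" by auto
        then have "y t \<le> Z" unfolding y_def Z_def
          by (intro exp_mono mult_left_mono) auto
        then have "y t ^ Suc k \<le> Z ^ Suc k" using ypos[of t] by (intro power_mono) auto
        then show "norm (g k t) \<le> Z ^ Suc k / fact (Suc k) * \<bar>h t\<bar>"
          unfolding norm_g by (intro mult_right_mono divide_right_mono) auto
      qed
      also have "\<dots> = Z ^ Suc k / fact (Suc k) * C" unfolding C_def by simp
      finally show "norm (integral\<^sup>L (lebesgue_on {0..a}) (\<lambda>t. norm (g k t))) \<le> Z ^ Suc k / fact (Suc k) * C"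
        by (simp add: integral_nonneg_AE)
    qed
    have "integral\<^sup>L (lebesgue_on {0..a}) (s n) = integral\<^sup>L (lebesgue_on {0..a}) (\<lambda>t. \<Sum>k. g k t)"
    proof -
      have "s n = (\<lambda>t. \<Sum>k. g k t)" by (rule ext) (rule sums_unique[OF sums])
      then show ?thesis by simp
    qed
    also have "\<dots> = (\<Sum>k. integral\<^sup>L (lebesgue_on {0..a}) (g k))"
      by (rule integral_suminf[OF int_g sm1 sm2])
    also have "\<dots> = (\<Sum>k. c k * I (Suc k * n))"
      unfolding I_def g_eq by simp
    finally have eq: "integral\<^sup>L (lebesgue_on {0..a}) (s n) = (\<Sum>k. c k * I (Suc k * n))" .
    have M0: "0 \<le> M" using bnd[of 0] by linarith
    have wpos: "w > 0" unfolding w_def by simp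
    have bk: "norm (c k * I (Suc k * n)) \<le> M * (w ^ Suc k / fact (Suc k))" for k
    proof -
      have "norm (c k * I (Suc k * n)) = w ^ Suc k / fact (Suc k) * \<bar>I (Suc k * n)\<bar>"
        unfolding c_def using wpos by (simp add: abs_mult power_abs)
      also have "\<dots> \<le> w ^ Suc k / fact (Suc k) * M"
        using bnd[of "Suc k * n"] wpos unfolding I_def by (intro mult_left_mono) auto
      finally show ?thesis by (simp add: mult.commute)
    qed
    have smw: "(\<lambda>k. M * (w ^ Suc k / fact (Suc k))) sums (M * (exp w - 1))"
      by (rule sums_mult) (rule exp_sums_Suc)
    have sn: "summable (\<lambda>k. norm (c k * I (Suc k * n)))"
      by (rule summable_comparison_test'[OF sums_summable[OF smw]]) (use bk in auto)
    have "\<bar>\<Sum>k. c k * I (Suc k * n)\<bar> \<le> (\<Sum>k. norm (c k * I (Suc k * n)))"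
      using summable_norm[OF sn] by simp
    also have "\<dots> \<le> (\<Sum>k. M * (w ^ Suc k / fact (Suc k)))"
      by (rule suminf_le[OF bk sn sums_summable[OF smw]])
    also have "\<dots> = M * (exp w - 1)" using sums_unique[OF smw] by simp
    finally show ?thesis unfolding eq w_def .
  qed
  have lim0: "(\<lambda>n. integral\<^sup>L (lebesgue_on {0..a}) (s n)) \<longlonglongrightarrow> 0"
  proof (rule Lim_null_comparison)
    show "\<forall>\<^sub>F n in sequentially. norm (integral\<^sup>L (lebesgue_on {0..a}) (s n)) \<le> M * (exp (exp (- (real n * u))) - 1)"
      using ser by simp
    have "(\<lambda>n::nat. exp (exp (- (real n * u))) - 1) \<longlonglongrightarrow> 0" using u by real_asymp
    then show "(\<lambda>n. M * (exp (exp (- (real n * u))) - 1)) \<longlonglongrightarrow> 0"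
      by (rule tendsto_mult_right_zero)
  qed
  have "integral\<^sup>L (lebesgue_on {0..a}) f = 0"
    using LIMSEQ_unique[OF lim1 lim0] .
  then show ?thesis unfolding f_def by (subst (asm) int_lebesgue_on_sub) (use u in auto)
qed

lemma lemma1:
  fixes h :: "real \<Rightarrow> real"
  assumes h: "continuous_on UNIV h" and a: "a > 0"
    and bnd: "\<And>n::nat. \<bar>integral\<^sup>L (lebesgue_on {0..a}) (\<lambda>t. exp (real n * t) * h t)\<bar> \<le> M"
    and x: "x \<in> {0..a}"
  shows "h x = 0"
proof -
  have ha: "continuous_on {0..a} h" using h by (rule continuous_on_subset) auto
  have hk: "integral {u..a} h = 0" if "0 < u" "u < a" for u
    using lemma1_step[OF h bnd that] lebesgue_integral_eq_integral[OF cont_integrable_on[OF h]] by simp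
  define G where "G v = integral {0..v} h" for v
  have inner: "h y = 0" if y: "y \<in> {0<..<a}" for y
  proof -
    have "(G has_vector_derivative h y) (at y within {0..a})"
      unfolding G_def by (rule integral_has_vector_derivative[OF ha]) (use y in auto)
    moreover have "at y within {0..a} = at y"
      by (rule at_within_interior) (use y in auto)
    ultimately have d1: "(G has_vector_derivative h y) (at y)" by simp
    have "((\<lambda>_. integral {0..a} h) has_vector_derivative 0) (at y)" by (rule has_vector_derivative_const)
    then have d2: "(G has_vector_derivative 0) (at y)"
    proof (rule has_vector_derivative_transform_within_open[OF _ open_greaterThanLessThan y])
      fix v assume v: "v \<in> {0<..<a}"
      have "integral {0..v} h + integral {v..a} h = integral {0..a} h"
        by (rule Henstock_Kurzweil_Integration.integral_combine) (use v ha in \<open>auto intro: integrable_continuous_real\<close>)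
      then show "integral {0..a} h = G v" using hk[of v] v by (simp add: G_def)
    qed
    show ?thesis using vector_derivative_unique_at[OF d1 d2] .
  qed
  show ?thesis
    by (rule continuous_constant_on_closure[where S="{0<..<a}"]) (use a ha inner x in auto)
qed


lemma cont_int_HK: "continuous_on UNIV (f::real\<Rightarrow>real) \<Longrightarrow> f integrable_on {a..b}"
  by (metis integrable_continuous_real continuous_on_subset subset_UNIV)

lemma LtoHK: "continuous_on UNIV (\<phi>::real\<Rightarrow>real) \<Longrightarrow> integral\<^sup>L (lebesgue_on {a..b}) \<phi> = integral {a..b} \<phi>"
  by (rule lebesgue_integral_eq_integral[OF cont_integrable_on]) auto

lemma conv_HK:
  fixes F G :: "real \<Rightarrow> real"
  assumes F: "continuous_on UNIV F" and G: "continuous_on UNIV G"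
  shows "conv F G s = integral {0..s} (\<lambda>x. F (s - x) * G x)"
  unfolding conv_def by (rule LtoHK) (intro continuous_intros cont_comp[OF F] G)

lemma HK_bound:
  fixes \<phi> h :: "real \<Rightarrow> real"
  assumes "continuous_on UNIV \<phi>" "continuous_on UNIV h" "B \<ge> 0"
    and "\<And>x. x \<in> {a..b} \<Longrightarrow> \<bar>\<phi> x\<bar> \<le> B * \<bar>h x\<bar>"
  shows "\<bar>integral {a..b} \<phi>\<bar> \<le> B * integral {a..b} (\<lambda>x. \<bar>h x\<bar>)"
proof -
  have "norm (integral {a..b} \<phi>) \<le> integral {a..b} (\<lambda>x. B * \<bar>h x\<bar>)"
    by (rule integral_norm_bound_integral)
       (use assms in \<open>auto intro!: cont_int_HK continuous_intros\<close>)
  then show ?thesis by simp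
qed

lemma HK_abs_sub:
  fixes h :: "real \<Rightarrow> real"
  assumes "continuous_on UNIV h" "0 \<le> a" "b \<le> c" 
  shows "integral {a..b} (\<lambda>x. \<bar>h x\<bar>) \<le> integral {0..c} (\<lambda>x. \<bar>h x\<bar>)"
proof (cases "a \<le> b")
  case True
  show ?thesis
    by (rule integral_subset_le) (use assms True in \<open>auto intro!: cont_int_HK continuous_intros\<close>)
next
  case False
  then have "integral {a..b} (\<lambda>x. \<bar>h x\<bar>) = 0" by simp
  moreover have "integral {0..c} (\<lambda>x. \<bar>h x\<bar>) \<ge> 0"
    by (rule integral_nonneg) (use assms in \<open>auto intro!: cont_int_HK continuous_intros\<close>)
  ultimately show ?thesis by simp
qed

lemma sym_weak:
  fixes h :: "real \<Rightarrow> real"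
  assumes h: "continuous_on UNIV h" and c: "c > 0"
    and hh: "\<And>s. s \<in> {0..c} \<Longrightarrow> conv h h s = 0"
    and x: "x \<in> {0..c/4}"
  shows "h x = 0"
proof -
  define T where "T = c / 2"
  define K where "K = integral {0..c} (\<lambda>x. \<bar>h x\<bar>)"
  have T: "T > 0" "c = 2 * T" using c by (auto simp: T_def)
  have K0: "K \<ge> 0" unfolding K_def
    by (rule integral_nonneg) (auto intro!: cont_int_HK continuous_intros h)
  have main: "\<bar>integral {0..T/2} (\<lambda>x. exp (real n * (T/2 - x)) * h x)\<bar> \<le> 2 * K" for n :: nat
  proof -
    define E where "E z = exp (real n * z)" for z
    have cE: "continuous_on UNIV E" unfolding E_def by (intro continuous_intros)
    have Epos: "E z > 0" for z unfolding E_def by simp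
    have Eadd: "E (u + v) = E u * E v" for u v unfolding E_def by (simp add: distrib_left exp_add)
    have Emono: "u \<le> v \<Longrightarrow> E u \<le> E v" for u v unfolding E_def by (intro exp_mono mult_left_mono) auto
    define \<Psi> where "\<Psi> = conv E h"
    have c\<Psi>: "continuous_on UNIV \<Psi>" unfolding \<Psi>_def by (rule conv_continuous[OF cE h])
    have \<Psi>_eq: "\<Psi> r = integral {0..r} (\<lambda>y. E (r - y) * h y)" for r
      unfolding \<Psi>_def by (rule conv_HK[OF cE h])
    define J where "J = integral {0..T} (\<lambda>x. E (T - x) * h x)"
    define \<rho> where "\<rho> x = \<Psi> (c - x) - E (T - x) * J" for x
    have c\<rho>: "continuous_on UNIV \<rho>" unfolding \<rho>_def
      by (intro continuous_intros cont_comp[OF c\<Psi>] cont_comp[OF cE])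
    have Q0: "integral {0..c} (\<lambda>x. \<Psi> (c - x) * h x) = 0"
    proof -
      have "integral {0..c} (\<lambda>x. \<Psi> (c - x) * h x) = conv (conv E h) h c"
        unfolding \<Psi>_def by (rule conv_HK[symmetric, OF conv_continuous[OF cE h] h])
      also have "\<dots> = conv E (conv h h) c" by (rule conv_assoc[symmetric, OF cE h h])
      also have "\<dots> = 0" unfolding conv_def[of E]
        by (rule Lint_zero) (use hh in auto)
      finally show ?thesis .
    qed
    have \<rho>_eq: "\<rho> x = integral {T..c-x} (\<lambda>y. E (c - x - y) * h y)" if x: "x \<in> {0..T}" for x
    proof -
      have "\<Psi> (c - x) = integral {0..T} (\<lambda>y. E (c - x - y) * h y) + integral {T..c-x} (\<lambda>y. E (c - x - y) * h y)"
        unfolding \<Psi>_eq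
        by (rule Henstock_Kurzweil_Integration.integral_combine[symmetric])
           (use x T in \<open>auto intro!: cont_int_HK continuous_intros cont_comp[OF cE] h\<close>)
      moreover have "integral {0..T} (\<lambda>y. E (c - x - y) * h y) = E (T - x) * J"
      proof -
        have ee: "E (c - x - y) = E (T - x) * E (T - y)" for y
        proof -
          have "c - x - y = (T - x) + (T - y)" using T by simp
          then show ?thesis by (metis Eadd)
        qed
        have "integral {0..T} (\<lambda>y. E (c - x - y) * h y) = integral {0..T} (\<lambda>y. E (T - x) * (E (T - y) * h y))"
          by (simp add: ee mult.assoc)
        also have "\<dots> = E (T - x) * J" unfolding J_def by simp
        finally show ?thesis .
      qed
      ultimately show ?thesis unfolding \<rho>_def by simp
    qed
    have \<rho>_bnd: "\<bar>\<rho> x\<bar> \<le> E T * K" if x: "x \<in> {0..T}" for x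
    proof -
      have "\<bar>\<rho> x\<bar> \<le> E T * integral {T..c-x} (\<lambda>y. \<bar>h y\<bar>)"
        unfolding \<rho>_eq[OF x]
      proof (rule HK_bound)
        fix y assume y: "y \<in> {T..c-x}"
        have "E (c - x - y) \<le> E T" by (rule Emono) (use x y T in auto)
        then show "\<bar>E (c - x - y) * h y\<bar> \<le> E T * \<bar>h y\<bar>"
          using Epos[of "c - x - y"] by (simp add: abs_mult mult_right_mono)
      qed (use Epos in \<open>auto intro!: continuous_intros cont_comp[OF cE] h less_imp_le\<close>)
      also have "\<dots> \<le> E T * K" unfolding K_def
        by (intro mult_left_mono HK_abs_sub h less_imp_le[OF Epos]) (use T x in auto)
      finally show ?thesis .
    qed
    have \<Psi>_bnd: "\<bar>\<Psi> (c - x)\<bar> \<le> E T * K" if x: "x \<in> {T..c}" for x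
    proof -
      have "\<bar>\<Psi> (c - x)\<bar> \<le> E T * integral {0..c-x} (\<lambda>y. \<bar>h y\<bar>)"
        unfolding \<Psi>_eq
      proof (rule HK_bound)
        fix y assume y: "y \<in> {0..c-x}"
        have "E (c - x - y) \<le> E T" by (rule Emono) (use x y T in auto)
        then show "\<bar>E (c - x - y) * h y\<bar> \<le> E T * \<bar>h y\<bar>"
          using Epos[of "c - x - y"] by (simp add: abs_mult mult_right_mono)
      qed (use Epos in \<open>auto intro!: continuous_intros cont_comp[OF cE] h less_imp_le\<close>)
      also have "\<dots> \<le> E T * K" unfolding K_def
        by (intro mult_left_mono HK_abs_sub h less_imp_le[OF Epos]) (use T x in auto)
      finally show ?thesis .
    qed
    have split: "integral {0..c} (\<lambda>x. \<Psi> (c - x) * h x) =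
        integral {0..T} (\<lambda>x. \<Psi> (c - x) * h x) + integral {T..c} (\<lambda>x. \<Psi> (c - x) * h x)"
      by (rule Henstock_Kurzweil_Integration.integral_combine[symmetric])
         (use T in \<open>auto intro!: cont_int_HK continuous_intros cont_comp[OF c\<Psi>] h\<close>)
    have first: "integral {0..T} (\<lambda>x. \<Psi> (c - x) * h x) = J * J + integral {0..T} (\<lambda>x. \<rho> x * h x)"
    proof -
      have "integral {0..T} (\<lambda>x. \<Psi> (c - x) * h x) = integral {0..T} (\<lambda>x. J * (E (T - x) * h x) + \<rho> x * h x)"
        unfolding \<rho>_def by (simp add: algebra_simps)
      also have "\<dots> = integral {0..T} (\<lambda>x. J * (E (T - x) * h x)) + integral {0..T} (\<lambda>x. \<rho> x * h x)"
        by (rule integral_add) (auto intro!: cont_int_HK continuous_intros cont_comp[OF cE] c\<rho> h)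
      also have "integral {0..T} (\<lambda>x. J * (E (T - x) * h x)) = J * J" unfolding J_def by simp
      finally show ?thesis .
    qed
    have b1: "\<bar>integral {0..T} (\<lambda>x. \<rho> x * h x)\<bar> \<le> (E T * K) * integral {0..T} (\<lambda>x. \<bar>h x\<bar>)"
      by (rule HK_bound) (use \<rho>_bnd K0 Epos in \<open>auto intro!: continuous_intros c\<rho> h
           simp: abs_mult mult_right_mono less_imp_le\<close>)
    have b2: "\<bar>integral {T..c} (\<lambda>x. \<Psi> (c - x) * h x)\<bar> \<le> (E T * K) * integral {T..c} (\<lambda>x. \<bar>h x\<bar>)"
      by (rule HK_bound) (use \<Psi>_bnd K0 Epos in \<open>auto intro!: continuous_intros cont_comp[OF c\<Psi>] h
           simp: abs_mult mult_right_mono less_imp_le\<close>)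
    have Ksplit: "integral {0..T} (\<lambda>x. \<bar>h x\<bar>) + integral {T..c} (\<lambda>x. \<bar>h x\<bar>) = K"
      unfolding K_def by (rule Henstock_Kurzweil_Integration.integral_combine)
         (use T in \<open>auto intro!: cont_int_HK continuous_intros h\<close>)
    have JJ: "J * J \<le> E T * K * K"
    proof -
      have "J * J = - integral {0..T} (\<lambda>x. \<rho> x * h x) - integral {T..c} (\<lambda>x. \<Psi> (c - x) * h x)"
        using Q0 split first by linarith
      also have "\<dots> \<le> (E T * K) * integral {0..T} (\<lambda>x. \<bar>h x\<bar>) + (E T * K) * integral {T..c} (\<lambda>x. \<bar>h x\<bar>)"
        using b1 b2 by linarith
      also have "\<dots> = E T * K * K" by (metis Ksplit distrib_left)
      finally show ?thesis .
    qed
    have ET: "E T = E (T/2) * E (T/2)" using Eadd[of "T/2" "T/2"] by simp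
    have Jb: "\<bar>J\<bar> \<le> E (T/2) * K"
    proof -
      have "J\<^sup>2 \<le> (E (T/2) * K)\<^sup>2" using JJ ET by (simp add: power2_eq_square algebra_simps)
      then have "\<bar>J\<bar> \<le> \<bar>E (T/2) * K\<bar>" by (simp add: abs_le_square_iff)
      then show ?thesis using Epos[of "T/2"] K0 by simp
    qed
    define L where "L = integral {0..T/2} (\<lambda>x. E (T/2 - x) * h x)"
    define R where "R = integral {T/2..T} (\<lambda>x. E (T/2 - x) * h x)"
    have JLR: "J = E (T/2) * (L + R)"
    proof -
      have "J = integral {0..T/2} (\<lambda>x. E (T - x) * h x) + integral {T/2..T} (\<lambda>x. E (T - x) * h x)"
        unfolding J_def by (rule Henstock_Kurzweil_Integration.integral_combine[symmetric])
           (use T in \<open>auto intro!: cont_int_HK continuous_intros cont_comp[OF cE] h\<close>)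
      also have "\<dots> = integral {0..T/2} (\<lambda>x. E (T/2) * (E (T/2 - x) * h x)) + integral {T/2..T} (\<lambda>x. E (T/2) * (E (T/2 - x) * h x))"
        using Eadd by (simp add: algebra_simps flip: Eadd)
      also have "\<dots> = E (T/2) * (L + R)" unfolding L_def R_def by (simp only: integral_mult_right distrib_left)
      finally show ?thesis .
    qed
    have Rb: "\<bar>R\<bar> \<le> 1 * K"
    proof -
      have "\<bar>R\<bar> \<le> 1 * integral {T/2..T} (\<lambda>x. \<bar>h x\<bar>)"
        unfolding R_def
      proof (rule HK_bound)
        fix x assume x: "x \<in> {T/2..T}"
        have "E (T/2 - x) \<le> E 0" by (rule Emono) (use x in auto)
        then have e1: "E (T/2 - x) \<le> 1" by (simp add: E_def)
        then show "\<bar>E (T/2 - x) * h x\<bar> \<le> 1 * \<bar>h x\<bar>"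
          using Epos[of "T/2 - x"] by (simp add: abs_mult mult_left_le_one_le)
      qed (auto intro!: continuous_intros cont_comp[OF cE] h)
      also have "\<dots> \<le> 1 * K" unfolding K_def
        by (intro mult_left_mono HK_abs_sub h) (use T in auto)
      finally show ?thesis .
    qed
    have "E (T/2) * \<bar>L + R\<bar> \<le> E (T/2) * K" using Jb JLR Epos[of "T/2"] by (simp add: abs_mult)
    then have "\<bar>L + R\<bar> \<le> K" using Epos[of "T/2"] by simp
    then have "\<bar>L\<bar> \<le> 2 * K" using Rb by linarith
    then show ?thesis unfolding L_def E_def .
  qed
  define h' where "h' t = h (T/2 - t)" for t
  have ch': "continuous_on UNIV h'" unfolding h'_def by (intro cont_comp[OF h] continuous_intros)
  have "h' (T/2 - x) = 0"
  proof (rule lemma1[OF ch'])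
    show "T/2 > 0" using T by simp
    show "T/2 - x \<in> {0..T/2}" using x T by auto
    fix n :: nat
    have "integral\<^sup>L (lebesgue_on {0..T/2}) (\<lambda>t. exp (real n * t) * h' t)
        = integral\<^sup>L (lebesgue_on {0..T/2}) (\<lambda>t. exp (real n * (T/2 - t)) * h t)"
      unfolding h'_def by (subst int_reflect) simp
    also have "\<dots> = integral {0..T/2} (\<lambda>t. exp (real n * (T/2 - t)) * h t)"
      by (rule LtoHK) (intro continuous_intros h)
    finally show "\<bar>integral\<^sup>L (lebesgue_on {0..T/2}) (\<lambda>t. exp (real n * t) * h' t)\<bar> \<le> 2 * K"
      using main[of n] by simp
  qed
  then show ?thesis unfolding h'_def by simp
qed


lemma zero_extend:
  fixes h :: "real \<Rightarrow> real" and L :: real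
  assumes L: "L > 0" and cont: "continuous_on UNIV h"
    and step: "\<And>a. 0 \<le> a \<Longrightarrow> a < L \<Longrightarrow> (\<forall>x. 0 \<le> x \<and> x < a \<longrightarrow> h x = 0) \<Longrightarrow>
                  \<exists>a'>a. \<forall>x. 0 \<le> x \<and> x \<le> a' \<longrightarrow> h x = 0"
    and x: "0 \<le> x" "x \<le> L"
  shows "h x = 0"
proof -
  define A where "A = {a. 0 \<le> a \<and> a \<le> L \<and> (\<forall>x. 0 \<le> x \<and> x < a \<longrightarrow> h x = 0)}"
  have A0: "0 \<in> A" using L by (auto simp: A_def)
  have bdd: "bdd_above A" by (rule bdd_aboveI[where M=L]) (auto simp: A_def)
  define s where "s = Sup A"
  have s0: "0 \<le> s" unfolding s_def by (rule cSup_upper[OF A0 bdd])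
  have sL: "s \<le> L" unfolding s_def by (rule cSup_least) (use A0 in \<open>auto simp: A_def\<close>)
  have zs: "h y = 0" if "0 \<le> y" "y < s" for y
  proof -
    from that have "\<exists>a\<in>A. y < a" using less_cSup_iff[OF _ bdd] A0 unfolding s_def by blast
    then show ?thesis using that by (auto simp: A_def)
  qed
  have "s = L"
  proof (rule ccontr)
    assume "s \<noteq> L"
    with sL have "s < L" by simp
    have "\<forall>x. 0 \<le> x \<and> x < s \<longrightarrow> h x = 0" using zs by blast
    then obtain a' where a': "a' > s" "\<forall>x. 0 \<le> x \<and> x \<le> a' \<longrightarrow> h x = 0"
      using step[OF s0 \<open>s < L\<close>] by blast
    have "min a' L \<in> A" using a' s0 \<open>s < L\<close> by (auto simp: A_def)
    then have "min a' L \<le> s" unfolding s_def by (rule cSup_upper[OF _ bdd])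
    with a' \<open>s < L\<close> show False by simp
  qed
  have cc: "continuous_on (closure {0..<L}) h" by (rule continuous_on_subset[OF cont]) auto
  have xc: "x \<in> closure {0..<L}" using x L by simp
  show ?thesis by (rule continuous_constant_on_closure[OF cc _ xc]) (use zs \<open>s = L\<close> in auto)
qed

lemma conv_at0: "conv F G 0 = 0"
  unfolding conv_def using int_lebesgue_on_point[of 0] by simp

lemma sym_strong:
  fixes h :: "real \<Rightarrow> real"
  assumes h: "continuous_on UNIV h" and c: "c > 0"
    and hh: "\<And>s. s \<in> {0..c} \<Longrightarrow> conv h h s = 0"
    and x: "x \<in> {0..c/2}"
  shows "h x = 0"
proof (rule zero_extend[OF _ h])
  show "c / 2 > 0" using c by simp
  show "0 \<le> x" "x \<le> c/2" using x by auto
  fix a assume a: "0 \<le> a" "a < c / 2" and Z: "\<forall>x. 0 \<le> x \<and> x < a \<longrightarrow> h x = 0"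
  define h' where "h' y = h (y + a)" for y
  have ch': "continuous_on UNIV h'" unfolding h'_def by (intro cont_comp[OF h] continuous_intros)
  have hz: "h' y = 0" if y: "y \<in> {0..(c - 2*a)/4}" for y
  proof (rule sym_weak[OF ch'])
    show "c - 2 * a > 0" using a by simp
    show "y \<in> {0..(c - 2 * a) / 4}" by (rule y)
    fix s assume s: "s \<in> {0..c - 2 * a}"
    have "conv h' h' s = conv h h (s + a + a)"
      unfolding h'_def by (rule conv_shift[symmetric]) (use a s Z in auto)
    also have "\<dots> = 0" by (rule hh) (use a s in auto)
    finally show "conv h' h' s = 0" .
  qed
  have "h y = 0" if "0 \<le> y" "y \<le> a + (c - 2*a)/4" for y
  proof (cases "y < a")
    case True then show ?thesis using Z that by auto
  next
    case False
    then have "h' (y - a) = 0" by (intro hz) (use that in \<open>auto simp: field_simps\<close>)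
    then show ?thesis by (simp add: h'_def)
  qed
  then have "\<forall>y. 0 \<le> y \<and> y \<le> a + (c - 2*a)/4 \<longrightarrow> h y = 0" by blast
  moreover have "a + (c - 2*a)/4 > a" using a by simp
  ultimately show "\<exists>a'>a. \<forall>x. 0 \<le> x \<and> x \<le> a' \<longrightarrow> h x = 0" by blast
qed


lemma moments_zero:
  fixes m :: "real \<Rightarrow> real"
  assumes m: "continuous_on UNIV m" and s: "s > 0"
    and mom: "\<And>k. integral {0..s} (\<lambda>y. y^k * m y) = 0"
    and y: "y \<in> {0..s}"
  shows "m y = 0"
proof -
  have pz: "integral {0..s} (\<lambda>y. (\<Sum>i\<le>n. a i * y^i) * m y) = 0" for a n
  proof -
    have "integral {0..s} (\<lambda>y. (\<Sum>i\<le>n. a i * y^i) * m y) = integral {0..s} (\<lambda>y. \<Sum>i\<le>n. a i * (y^i * m y))"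
      by (simp add: sum_distrib_right mult.assoc)
    also have "\<dots> = (\<Sum>i\<le>n. integral {0..s} (\<lambda>y. a i * (y^i * m y)))"
      by (rule Henstock_Kurzweil_Integration.integral_sum)
         (auto intro!: cont_int_HK continuous_intros m)
    also have "\<dots> = 0" using mom by simp
    finally show ?thesis .
  qed
  define C where "C = integral {0..s} (\<lambda>y. \<bar>m y\<bar>)"
  have C0: "C \<ge> 0" unfolding C_def by (rule integral_nonneg) (auto intro!: cont_int_HK continuous_intros m)
  have bnd: "integral {0..s} (\<lambda>y. m y * m y) \<le> e * C" if e: "e > 0" for e
  proof -
    have "continuous_on {0..s} m" using m by (rule continuous_on_subset) auto
    from Stone_Weierstrass_real_polynomial_function[OF compact_Icc this e]
    obtain p where p: "real_polynomial_function p" "\<And>x. x \<in> {0..s} \<Longrightarrow> \<bar>m x - p x\<bar> < e" by blast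
    from p(1) obtain a n where pe: "p = (\<lambda>x. \<Sum>i\<le>n. a i * x^i)"
      unfolding real_polynomial_function_iff_sum by blast
    have cp: "continuous_on UNIV p" unfolding pe by (intro continuous_intros)
    have "integral {0..s} (\<lambda>y. m y * m y) = integral {0..s} (\<lambda>y. m y * m y) - integral {0..s} (\<lambda>y. p y * m y)"
      using pz unfolding pe by simp
    also have "\<dots> = integral {0..s} (\<lambda>y. (m y - p y) * m y)"
      by (subst integral_diff[symmetric]) (auto intro!: cont_int_HK continuous_intros m cp simp: algebra_simps)
    also have "\<dots> \<le> integral {0..s} (\<lambda>y. e * \<bar>m y\<bar>)"
    proof (rule integral_le)
      fix x assume x: "x \<in> {0..s}"
      have "(m x - p x) * m x \<le> \<bar>m x - p x\<bar> * \<bar>m x\<bar>" by (simp add: abs_mult[symmetric])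
      also have "\<dots> \<le> e * \<bar>m x\<bar>" using p(2)[OF x] by (intro mult_right_mono) auto
      finally show "(m x - p x) * m x \<le> e * \<bar>m x\<bar>" .
    qed (auto intro!: cont_int_HK continuous_intros m cp)
    also have "\<dots> = e * C" unfolding C_def by simp
    finally show ?thesis .
  qed
  have le0: "integral {0..s} (\<lambda>y. m y * m y) \<le> 0"
  proof (rule field_le_epsilon)
    fix e :: real assume e: "e > 0"
    have "integral {0..s} (\<lambda>y. m y * m y) \<le> (e / (C + 1)) * C" using e C0 by (intro bnd) auto
    also have "\<dots> \<le> e" using e C0 by (simp add: field_simps)
    finally show "integral {0..s} (\<lambda>y. m y * m y) \<le> 0 + e" by simp
  qed
  have ge0: "integral {0..s} (\<lambda>y. m y * m y) \<ge> 0"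
    by (rule integral_nonneg) (auto intro!: cont_int_HK continuous_intros m)
  have "integral {0..s} (\<lambda>y. m y * m y) = 0" using le0 ge0 by simp
  then have "\<forall>x\<in>{0..s}. m x * m x = 0"
    by (subst (asm) integral_eq_0_iff) (use s in \<open>auto intro!: continuous_intros continuous_on_subset[OF m]\<close>)
  then show ?thesis using y by simp
qed


lemma conv_assoc_fun:
  fixes X Y Z :: "real \<Rightarrow> real"
  assumes "continuous_on UNIV X" "continuous_on UNIV Y" "continuous_on UNIV Z"
  shows "conv X (conv Y Z) = conv (conv X Y) Z"
  by (rule ext) (rule conv_assoc[OF assms])

lemma conv_comm_fun: "conv X Y = conv Y X"
  by (rule ext) (rule conv_comm)

lemma binom_expand:
  fixes F G :: "real \<Rightarrow> real"
  assumes F: "continuous_on UNIV F" and G: "continuous_on UNIV G"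
  shows "conv F (\<lambda>y. y^k * G y) x =
    (\<Sum>i\<le>k. (of_nat (k choose i) * (-1)^i * x^(k-i)) * conv (\<lambda>y. y^i * F y) G x)"
proof -
  have pw: "F (x - y) * (y^k * G y) = (\<Sum>i\<le>k. (of_nat (k choose i) * (-1)^i * x^(k-i)) * ((x - y)^i * F (x - y) * G y))" for y
  proof -
    have "y^k = (-(x - y) + x)^k" by simp
    also have "\<dots> = (\<Sum>i\<le>k. of_nat (k choose i) * (-(x - y))^i * x^(k-i))" by (rule binomial_ring)
    also have "\<dots> = (\<Sum>i\<le>k. of_nat (k choose i) * ((-1)^i * (x - y)^i) * x^(k-i))"
      by (subst power_minus) (rule refl)
    finally have "y^k = (\<Sum>i\<le>k. of_nat (k choose i) * ((-1)^i * (x - y)^i) * x^(k-i))" .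
    then show ?thesis by (simp add: sum_distrib_left sum_distrib_right mult_ac)
  qed
  have "conv F (\<lambda>y. y^k * G y) x = integral\<^sup>L (lebesgue_on {0..x})
      (\<lambda>y. \<Sum>i\<le>k. (of_nat (k choose i) * (-1)^i * x^(k-i)) * ((x - y)^i * F (x - y) * G y))"
    unfolding conv_def pw ..
  also have "\<dots> = (\<Sum>i\<le>k. integral\<^sup>L (lebesgue_on {0..x}) (\<lambda>y. (of_nat (k choose i) * (-1)^i * x^(k-i)) * ((x - y)^i * F (x - y) * G y)))"
    by (rule Bochner_Integration.integral_sum)
       (auto intro!: cont_integrable_on continuous_intros cont_comp[OF F] G)
  also have "\<dots> = (\<Sum>i\<le>k. (of_nat (k choose i) * (-1)^i * x^(k-i)) * conv (\<lambda>y. y^i * F y) G x)"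
    unfolding conv_def by simp
  finally show ?thesis .
qed

lemma zero_upto:
  fixes h :: "real \<Rightarrow> real"
  assumes h: "continuous_on UNIV h" and h0: "h 0 = 0"
    and Z: "\<forall>x. 0 \<le> x \<and> x < a \<longrightarrow> h x = 0" and y: "0 \<le> y" "y \<le> a"
  shows "h y = 0"
proof (cases "y < a")
  case True then show ?thesis using Z y by auto
next
  case False
  then have ya: "y = a" using y by simp
  show ?thesis
  proof (cases "a = 0")
    case True then show ?thesis using ya h0 by simp
  next
    case False
    then have a: "a > 0" using y ya by simp
    have cc: "continuous_on (closure {0..<a}) h" by (rule continuous_on_subset[OF h]) auto
    have xc: "y \<in> closure {0..<a}" using ya a by simp
    show ?thesis by (rule continuous_constant_on_closure[OF cc _ xc]) (use Z in auto)
  qed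
qed

lemma bootstrap:
  fixes F G :: "real \<Rightarrow> real"
  assumes F: "continuous_on UNIV F" and G: "continuous_on UNIV G" and S: "S > 0"
    and u0: "\<And>s. s \<in> {0..S} \<Longrightarrow> conv F G s = 0"
  shows "\<forall>x\<in>{0..S/2}. conv (\<lambda>y. y^k * F y) G x = 0"
proof (induction k rule: less_induct)
  case (less k)
  define A where "A i = conv (\<lambda>y. y^i * F y) G" for i
  have cP: "continuous_on UNIV (\<lambda>y. y^i * F y)" for i by (intro continuous_intros F)
  have cA: "continuous_on UNIV (A i)" for i unfolding A_def by (rule conv_continuous[OF cP G])
  have IH: "\<And>i x. i < k \<Longrightarrow> x \<in> {0..S/2} \<Longrightarrow> A i x = 0" using less unfolding A_def by blast
  show ?case
  proof (cases "k = 0")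
    case True
    show ?thesis
    proof
      fix x assume x: "x \<in> {0..S/2}"
      have "conv (\<lambda>y. y^k * F y) G x = conv F G x" using True by simp
      also have "\<dots> = 0" by (rule u0) (use x S in auto)
      finally show "conv (\<lambda>y. y^k * F y) G x = 0" .
    qed
  next
    case False
    have "A k x = 0" if x: "x \<in> {0..S/2}" for x
    proof (rule zero_extend[OF _ cA])
      show "S/2 > 0" using S by simp
      show "0 \<le> x" "x \<le> S/2" using x by auto
      fix a assume a: "0 \<le> a" "a < S/2" and Z: "\<forall>x. 0 \<le> x \<and> x < a \<longrightarrow> A k x = 0"
      have Za: "A k y = 0" if "0 \<le> y" "y \<le> a" for y
        by (rule zero_upto[OF cA _ Z that]) (simp add: A_def conv_at0)
      define P where "P = (\<lambda>y::real. y^k * F y)"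
      define Q where "Q = (\<lambda>y::real. y^k * G y)"
      have cP': "continuous_on UNIV P" unfolding P_def by (rule cP)
      have cQ: "continuous_on UNIV Q" unfolding Q_def by (intro continuous_intros G)
      have AkP: "A k = conv P G" unfolding A_def P_def ..
      have cFG: "continuous_on UNIV (conv F G)" by (rule conv_continuous[OF F G])
      have cFQ: "continuous_on UNIV (conv F Q)" by (rule conv_continuous[OF F cQ])
      have cGF: "continuous_on UNIV (conv G F)" by (rule conv_continuous[OF G F])
      have eqf: "conv (A k) (conv F Q) = conv (conv P Q) (conv F G)"
      proof -
        have "conv (A k) (conv F Q) = conv P (conv G (conv F Q))"
          unfolding AkP by (rule conv_assoc_fun[symmetric, OF cP' G cFQ])
        also have "conv G (conv F Q) = conv (conv G F) Q" by (rule conv_assoc_fun[OF G F cQ])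
        also have "conv G F = conv F G" by (rule conv_comm_fun)
        also have "conv (conv F G) Q = conv Q (conv F G)" by (rule conv_comm_fun)
        also have "conv P (conv Q (conv F G)) = conv (conv P Q) (conv F G)"
          by (rule conv_assoc_fun[OF cP' cQ cFG])
        finally show ?thesis .
      qed
      have hh: "conv (A k) (A k) s = 0" if s: "s \<in> {0..a + S/2}" for s
      proof -
        define c where "c i = (of_nat (k choose i) * (-1)^i :: real)" for i :: nat
        have cAi: "continuous_on UNIV (\<lambda>x. x^(k-i) * A i x)" for i by (intro continuous_intros cA)
        have z1: "conv (A k) (conv F Q) s = 0"
          unfolding eqf by (rule conv_zero[where a=0 and b=S]) (use u0 conv_at0 s a in auto)
        have "conv (A k) (conv F Q) s = conv (A k) (\<lambda>x. \<Sum>i\<le>k. c i * (x^(k-i) * A i x)) s"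
        proof (rule conv_cong)
          fix x assume "x \<in> {0..s}"
          show "conv F Q x = (\<Sum>i\<le>k. c i * (x^(k-i) * A i x))"
            unfolding Q_def binom_expand[OF F G] A_def c_def by (simp add: mult_ac)
        qed simp
        also have "\<dots> = (\<Sum>i\<le>k. conv (A k) (\<lambda>x. c i * (x^(k-i) * A i x)) s)"
          by (rule conv_sum_right[OF cA]) (auto intro!: continuous_intros cA)
        also have "\<dots> = (\<Sum>i\<le>k. c i * conv (A k) (\<lambda>x. x^(k-i) * A i x) s)"
          by (simp add: conv_cmult_right)
        also have "\<dots> = (\<Sum>i<k. c i * conv (A k) (\<lambda>x. x^(k-i) * A i x) s) + c k * conv (A k) (\<lambda>x. x^(k-k) * A k x) s"
          by (simp add: lessThan_Suc_atMost[symmetric])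
        also have "(\<Sum>i<k. c i * conv (A k) (\<lambda>x. x^(k-i) * A i x) s) = 0"
        proof (rule sum.neutral, rule ballI)
          fix i assume i: "i \<in> {..<k}"
          have "conv (A k) (\<lambda>x. x^(k-i) * A i x) s = 0"
            by (rule conv_zero[where a=a and b="S/2"]) (use Za IH i s in auto)
          then show "c i * conv (A k) (\<lambda>x. x^(k-i) * A i x) s = 0" by simp
        qed
        finally have "c k * conv (A k) (A k) s = 0" using z1 by simp
        moreover have "c k \<noteq> 0" unfolding c_def by simp
        ultimately show ?thesis by simp
      qed
      have "A k y = 0" if y: "y \<in> {0..(a + S/2)/2}" for y
        by (rule sym_strong[OF cA _ hh y]) (use a S in auto)
      moreover have "(a + S/2)/2 > a" using a by simp
      ultimately show "\<exists>a'>a. \<forall>x. 0 \<le> x \<and> x \<le> a' \<longrightarrow> A k x = 0" by (intro exI[where x="(a + S/2)/2"] conjI) auto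
    qed
    then show ?thesis unfolding A_def by blast
  qed
qed


lemma core_claim:
  fixes F G :: "real \<Rightarrow> real"
  assumes F: "continuous_on UNIV F" and G: "continuous_on UNIV G" and S: "S > 0"
    and u0: "\<And>s. s \<in> {0..S} \<Longrightarrow> conv F G s = 0"
  shows "\<exists>\<epsilon>>0. (\<forall>x\<in>{0..\<epsilon>}. F x = 0) \<or> (\<forall>x\<in>{0..\<epsilon>}. G x = 0)"
proof -
  have mz: "F y * G (s - y) = 0" if s: "0 < s" "s \<le> S/2" and y: "y \<in> {0..s}" for s y
  proof (rule moments_zero[where m="\<lambda>y. F y * G (s - y)", OF _ s(1) _ y])
    show "continuous_on UNIV (\<lambda>y. F y * G (s - y))" by (intro continuous_intros F cont_comp[OF G])
    fix k :: nat
    have "0 = conv (\<lambda>y. y^k * F y) G s" using bootstrap[OF F G S u0, of k] s by auto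
    also have "\<dots> = integral\<^sup>L (lebesgue_on {0..s}) (\<lambda>x. (s - x)^k * F (s - x) * G x)"
      unfolding conv_def by simp
    also have "\<dots> = integral\<^sup>L (lebesgue_on {0..s}) (\<lambda>y. y^k * (F y * G (s - y)))"
      by (subst int_reflect) (simp add: mult_ac)
    also have "\<dots> = integral {0..s} (\<lambda>y. y^k * (F y * G (s - y)))"
      by (rule LtoHK) (intro continuous_intros F cont_comp[OF G])
    finally show "integral {0..s} (\<lambda>y. y^k * (F y * G (s - y))) = 0" by simp
  qed
  define \<epsilon> where "\<epsilon> = S / 4"
  have e: "\<epsilon> > 0" using S by (simp add: \<epsilon>_def)
  show ?thesis
  proof (cases "\<forall>x\<in>{0..\<epsilon>}. F x = 0")
    case True then show ?thesis using e by blast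
  next
    case False
    then obtain y0 where y0: "y0 \<in> {0..\<epsilon>}" "F y0 \<noteq> 0" by blast
    have Gz: "G z = 0" if z: "z \<in> {0<..\<epsilon>}" for z
    proof -
      have "F y0 * G (y0 + z - y0) = 0"
        by (rule mz) (use y0 z e in \<open>auto simp: \<epsilon>_def\<close>)
      then show ?thesis using y0 by simp
    qed
    have "G x = 0" if x: "x \<in> {0..\<epsilon>}" for x
    proof -
      have cc: "continuous_on (closure {0<..\<epsilon>}) G" by (rule continuous_on_subset[OF G]) auto
      have xc: "x \<in> closure {0<..\<epsilon>}" using x e by simp
      show ?thesis by (rule continuous_constant_on_closure[OF cc _ xc]) (use Gz in auto)
    qed
    then show ?thesis using e by blast
  qed
qed

lemma max_zero:
  fixes h :: "real \<Rightarrow> real"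
  assumes T: "T \<ge> 0"
  shows "\<exists>a. 0 \<le> a \<and> a \<le> T \<and> (\<forall>x. 0 \<le> x \<and> x < a \<longrightarrow> h x = 0) \<and>
             (\<forall>a'. a < a' \<and> a' \<le> T \<longrightarrow> \<not> (\<forall>x. 0 \<le> x \<and> x < a' \<longrightarrow> h x = 0))"
proof -
  define A where "A = {a. 0 \<le> a \<and> a \<le> T \<and> (\<forall>x. 0 \<le> x \<and> x < a \<longrightarrow> h x = 0)}"
  have A0: "0 \<in> A" using T by (auto simp: A_def)
  have bdd: "bdd_above A" by (rule bdd_aboveI[where M=T]) (auto simp: A_def)
  define s where "s = Sup A"
  have s0: "0 \<le> s" unfolding s_def by (rule cSup_upper[OF A0 bdd])
  have sT: "s \<le> T" unfolding s_def by (rule cSup_least) (use A0 in \<open>auto simp: A_def\<close>)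
  have zs: "\<forall>y. 0 \<le> y \<and> y < s \<longrightarrow> h y = 0"
  proof (intro allI impI)
    fix y assume y: "0 \<le> y \<and> y < s"
    then have "\<exists>a\<in>A. y < a" using less_cSup_iff[OF _ bdd] A0 unfolding s_def by blast
    then show "h y = 0" using y by (auto simp: A_def)
  qed
  have mx: "\<not> (\<forall>x. 0 \<le> x \<and> x < a' \<longrightarrow> h x = 0)" if "s < a'" "a' \<le> T" for a'
  proof
    assume "\<forall>x. 0 \<le> x \<and> x < a' \<longrightarrow> h x = 0"
    then have "a' \<in> A" using that s0 by (auto simp: A_def)
    then have "a' \<le> s" unfolding s_def by (rule cSup_upper[OF _ bdd])
    with that show False by simp
  qed
  show ?thesis using s0 sT zs mx by blast
qed

lemma titchmarsh_cont:
  fixes F G :: "real \<Rightarrow> real"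
  assumes F: "continuous_on UNIV F" and G: "continuous_on UNIV G" and T: "T > 0"
    and u0: "\<And>s. s \<in> {0..T} \<Longrightarrow> conv F G s = 0"
  shows "\<exists>a b. 0 \<le> a \<and> 0 \<le> b \<and> T \<le> a + b \<and> (\<forall>x. 0 \<le> x \<and> x < a \<longrightarrow> F x = 0) \<and>
               (\<forall>x. 0 \<le> x \<and> x < b \<longrightarrow> G x = 0)"
proof -
  obtain a where a: "0 \<le> a" "a \<le> T" "\<forall>x. 0 \<le> x \<and> x < a \<longrightarrow> F x = 0"
    "\<And>a'. a < a' \<Longrightarrow> a' \<le> T \<Longrightarrow> \<not> (\<forall>x. 0 \<le> x \<and> x < a' \<longrightarrow> F x = 0)"
    using max_zero[of T F] T by auto
  obtain b where b: "0 \<le> b" "b \<le> T" "\<forall>x. 0 \<le> x \<and> x < b \<longrightarrow> G x = 0"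
    "\<And>b'. b < b' \<Longrightarrow> b' \<le> T \<Longrightarrow> \<not> (\<forall>x. 0 \<le> x \<and> x < b' \<longrightarrow> G x = 0)"
    using max_zero[of T G] T by auto
  show ?thesis
  proof (cases "T \<le> a + b")
    case True then show ?thesis using a b by blast
  next
    case False
    define S where "S = T - a - b"
    have S: "S > 0" using False by (simp add: S_def)
    define F' where "F' x = F (x + a)" for x
    define G' where "G' x = G (x + b)" for x
    have cF': "continuous_on UNIV F'" unfolding F'_def by (intro cont_comp[OF F] continuous_intros)
    have cG': "continuous_on UNIV G'" unfolding G'_def by (intro cont_comp[OF G] continuous_intros)
    have u': "conv F' G' s = 0" if s: "s \<in> {0..S}" for s
    proof -
      have "conv F' G' s = conv F G (s + a + b)"
        unfolding F'_def G'_def by (rule conv_shift[symmetric]) (use a b s in auto)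
      also have "\<dots> = 0" by (rule u0) (use a b s in \<open>auto simp: S_def\<close>)
      finally show ?thesis .
    qed
    obtain \<epsilon> where e: "\<epsilon> > 0" and ee: "(\<forall>x\<in>{0..\<epsilon>}. F' x = 0) \<or> (\<forall>x\<in>{0..\<epsilon>}. G' x = 0)"
      using core_claim[OF cF' cG' S u'] by blast
    have aT: "a < T" "b < T" using False a b by auto
    show ?thesis
    proof (cases "\<forall>x\<in>{0..\<epsilon>}. F' x = 0")
      case True
      have "\<forall>x. 0 \<le> x \<and> x < min (a + \<epsilon>) T \<longrightarrow> F x = 0"
      proof (intro allI impI)
        fix x assume x: "0 \<le> x \<and> x < min (a + \<epsilon>) T"
        show "F x = 0"
        proof (cases "x < a")
          case True then show ?thesis using a x by auto
        next
          case False
          then have "F' (x - a) = 0" using True x by auto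
          then show ?thesis by (simp add: F'_def)
        qed
      qed
      moreover have "a < min (a + \<epsilon>) T" using aT e by simp
      ultimately show ?thesis using a(4)[of "min (a + \<epsilon>) T"] by simp
    next
      case False
      then have GG: "\<forall>x\<in>{0..\<epsilon>}. G' x = 0" using ee by blast
      have "\<forall>x. 0 \<le> x \<and> x < min (b + \<epsilon>) T \<longrightarrow> G x = 0"
      proof (intro allI impI)
        fix x assume x: "0 \<le> x \<and> x < min (b + \<epsilon>) T"
        show "G x = 0"
        proof (cases "x < b")
          case True then show ?thesis using b x by auto
        next
          case False
          then have "G' (x - b) = 0" using GG x by auto
          then show ?thesis by (simp add: G'_def)
        qed
      qed
      moreover have "b < min (b + \<epsilon>) T" using aT e by simp
      ultimately show ?thesis using b(4)[of "min (b + \<epsilon>) T"] by simp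
    qed
  qed
qed


lemma zero_AE:
  fixes \<phi> :: "real \<Rightarrow> real"
  assumes m: "\<phi> \<in> borel_measurable borel" and int: "integrable lborel \<phi>"
    and h1: "\<And>x. (\<integral>y. indicator {..x} y * \<phi> y \<partial>lborel) = 0"
    and h2: "(\<integral>y. \<phi> y \<partial>lborel) = 0"
  shows "AE x in lborel. \<phi> x = 0"
proof -
  define P where "P x = max 0 (\<phi> x)" for x
  define N where "N x = max 0 (- \<phi> x)" for x
  have mP[measurable]: "P \<in> borel_measurable borel" unfolding P_def using m by measurable
  have mN[measurable]: "N \<in> borel_measurable borel" unfolding N_def using m by measurable
  have iP: "integrable lborel P" unfolding P_def by (intro integrable_max int integrable_zero)
  have iN: "integrable lborel N" unfolding N_def by (intro integrable_max int integrable_zero integrable_minus)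
  have iI: "integrable lborel (\<lambda>y. indicator A y * h y)" if "A \<in> sets borel" "integrable lborel h" for A and h :: "real \<Rightarrow> real"
    using integrable_mult_indicator[OF _ that(2), of A] that(1) by simp
  have eq: "(\<integral>y. indicator {x<..} y * P y \<partial>lborel) = (\<integral>y. indicator {x<..} y * N y \<partial>lborel)" for x
  proof -
    have "(\<integral>y. indicator {x<..} y * P y \<partial>lborel) - (\<integral>y. indicator {x<..} y * N y \<partial>lborel)
        = (\<integral>y. indicator {x<..} y * \<phi> y \<partial>lborel)"
    proof -
      have i1: "integrable lborel (\<lambda>y. indicator {x<..} y * P y)" by (rule iI[OF _ iP]) simp
      have i2: "integrable lborel (\<lambda>y. indicator {x<..} y * N y)" by (rule iI[OF _ iN]) simp
      show ?thesis
        by (subst Bochner_Integration.integral_diff[symmetric, OF i1 i2])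
           (auto intro!: Bochner_Integration.integral_cong simp: P_def N_def indicator_def max_def)
    qed
    also have "\<dots> = (\<integral>y. \<phi> y \<partial>lborel) - (\<integral>y. indicator {..x} y * \<phi> y \<partial>lborel)"
    proof -
      have i1: "integrable lborel (\<lambda>y. indicator {..x} y * \<phi> y)" by (rule iI[OF _ int]) simp
      show ?thesis
        by (subst Bochner_Integration.integral_diff[symmetric, OF int i1])
           (auto intro!: Bochner_Integration.integral_cong simp: indicator_def)
    qed
    also have "\<dots> = 0" using h1 h2 by simp
    finally show ?thesis by simp
  qed
  have em: "emeasure (density lborel (\<lambda>x. ennreal (h x))) {x<..} = ennreal (\<integral>y. indicator {x<..} y * h y \<partial>lborel)"
    if "h \<in> borel_measurable borel" "integrable lborel h" "\<And>y. h y \<ge> 0" for h :: "real \<Rightarrow> real" and x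
  proof -
    have "emeasure (density lborel (\<lambda>x. ennreal (h x))) {x<..} = (\<integral>\<^sup>+ y. ennreal (h y) * indicator {x<..} y \<partial>lborel)"
      using that by (subst emeasure_density) auto
    also have "\<dots> = (\<integral>\<^sup>+ y. ennreal (indicator {x<..} y * h y) \<partial>lborel)"
      by (intro nn_integral_cong) (auto simp: indicator_def)
    also have "\<dots> = ennreal (\<integral>y. indicator {x<..} y * h y \<partial>lborel)"
      using that by (intro nn_integral_eq_integral iI) (auto simp: indicator_def)
    finally show ?thesis .
  qed
  have dens: "density lborel (\<lambda>x. ennreal (P x)) = density lborel (\<lambda>x. ennreal (N x))"
  proof (rule measure_eqI_lessThan)
    show "sets (density lborel (\<lambda>x. ennreal (P x))) = sets borel" by simp
    show "sets (density lborel (\<lambda>x. ennreal (N x))) = sets borel" by simp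
    fix x :: real
    show "emeasure (density lborel (\<lambda>x. ennreal (P x))) {x<..} < \<infinity>"
      using em[OF mP iP] by (simp add: P_def)
    show "emeasure (density lborel (\<lambda>x. ennreal (P x))) {x<..} = emeasure (density lborel (\<lambda>x. ennreal (N x))) {x<..}"
      using em[OF mP iP, of x] em[OF mN iN, of x] eq[of x] by (simp add: P_def N_def)
  qed
  have "AE x in lborel. ennreal (P x) = ennreal (N x)"
    by (rule sigma_finite_measure.density_unique[OF sigma_finite_lborel _ _ dens]) auto
  then show ?thesis
    by eventually_elim (auto simp: P_def N_def max_def split: if_splits)
qed


lemma borel_on: "(h::real\<Rightarrow>real) \<in> borel_measurable borel \<Longrightarrow> h \<in> borel_measurable (lebesgue_on S)"
  by (rule measurable_restrict_space1, rule measurable_completion) (simp add: measurable_lborel1)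

lemma borel_version:
  fixes f :: "real \<Rightarrow> real"
  assumes "f \<in> borel_measurable (lebesgue_on {0..1})"
  obtains fb where "fb \<in> borel_measurable borel" "AE x in lebesgue_on {0..1}. f x = fb x"
proof -
  have "(\<lambda>x. indicator {0..1} x *\<^sub>R f x) \<in> borel_measurable lebesgue"
    using assms by (subst (asm) borel_measurable_restrict_space_iff) auto
  from completion_ex_borel_measurable_real[OF this]
  obtain fb where fb: "fb \<in> borel_measurable lborel" "AE x in lborel. indicator {0..1} x *\<^sub>R f x = fb x"
    by blast
  have "AE x in lebesgue. indicator {0..1} x *\<^sub>R f x = fb x" by (rule AE_completion[OF fb(2)])
  then have "AE x in lebesgue_on {0..1}. f x = fb x"
    by (subst AE_restrict_space_iff) (auto elim!: eventually_mono simp: indicator_def)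
  moreover have "fb \<in> borel_measurable borel" using fb(1) by (simp add: measurable_lborel1)
  ultimately show ?thesis using that by blast
qed

lemma AE_sub:
  assumes "AE x in lebesgue_on {c..d}. P x" "c \<le> a" "b \<le> d"
  shows "AE x in lebesgue_on {a..b::real}. P x"
  using assms(1) by (subst (asm) AE_restrict_space_iff) (use assms(2,3) in \<open>auto simp: AE_restrict_space_iff elim!: eventually_mono\<close>)

lemma meas_sub:
  assumes "(f::real\<Rightarrow>real) \<in> borel_measurable (lebesgue_on {c..d})" "c \<le> a" "b \<le> d"
  shows "f \<in> borel_measurable (lebesgue_on {a..b})"
  by (rule measurable_restrict_mono[OF assms(1)]) (use assms in auto)

lemma int_cong_fb:
  fixes f fb h :: "real \<Rightarrow> real"
  assumes f: "f \<in> borel_measurable (lebesgue_on {0..1})" and fb: "fb \<in> borel_measurable borel"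
    and ae: "AE x in lebesgue_on {0..1}. f x = fb x" and h: "continuous_on UNIV h"
    and x: "0 \<le> a" "b \<le> 1"
  shows "integral\<^sup>L (lebesgue_on {a..b}) (\<lambda>v. f v * h v) = integral\<^sup>L (lebesgue_on {a..b}) (\<lambda>v. fb v * h v)"
proof (rule integral_cong_AE)
  show "(\<lambda>v. f v * h v) \<in> borel_measurable (lebesgue_on {a..b})"
    by (intro borel_measurable_times meas_sub[OF f] borel_on borel_measurable_continuous_onI h) (use x in auto)
  show "(\<lambda>v. fb v * h v) \<in> borel_measurable (lebesgue_on {a..b})"
    by (intro borel_measurable_times borel_on fb borel_measurable_continuous_onI h)
  show "AE v in lebesgue_on {a..b}. f v * h v = fb v * h v"
    using AE_sub[OF ae x] by eventually_elim simp
qed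

lemma conv_fb:
  fixes f fb G :: "real \<Rightarrow> real"
  assumes f: "f \<in> borel_measurable (lebesgue_on {0..1})" and fb: "fb \<in> borel_measurable borel"
    and ae: "AE x in lebesgue_on {0..1}. f x = fb x" and G: "continuous_on UNIV G"
    and u: "u \<le> 1"
  shows "conv f G u = conv fb G u"
proof -
  have "conv f G u = integral\<^sup>L (lebesgue_on {0..u}) (\<lambda>v. f v * G (u - v))"
    unfolding conv_def by (subst int_reflect) simp
  also have "\<dots> = integral\<^sup>L (lebesgue_on {0..u}) (\<lambda>v. fb v * G (u - v))"
    by (rule int_cong_fb[OF f fb ae]) (use u in \<open>auto intro!: cont_comp[OF G] continuous_intros\<close>)
  also have "\<dots> = conv fb G u"
    unfolding conv_def by (subst int_reflect) simp
  finally show ?thesis .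
qed


lemma glue_conv:
  fixes f fb G Fh :: "real \<Rightarrow> real"
  assumes f: "f \<in> borel_measurable (lebesgue_on {0..1})" and fb: "fb \<in> borel_measurable borel"
    and ae: "AE x in lebesgue_on {0..1}. f x = fb x"
    and fint: "integrable (lebesgue_on {0..T}) f" and T: "0 < T" "T \<le> 1"
    and G: "continuous_on UNIV G" and Gb: "\<And>x. \<bar>G x\<bar> \<le> M"
    and s: "s \<in> {0..T}"
    and Fh: "\<And>x. x \<in> {0..T} \<Longrightarrow> Fh x = integral\<^sup>L (lebesgue_on {0..x}) f"
  shows "conv Fh G s = integral\<^sup>L (lebesgue_on {0..s}) (\<lambda>u. conv f G u)"
proof -
  define fT where "fT x = indicator {0..T} x * fb x" for x
  have fTb[measurable]: "fT \<in> borel_measurable borel" unfolding fT_def using fb by measurable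
  have Gm[measurable]: "G \<in> borel_measurable borel" by (rule borel_measurable_continuous_onI[OF G])
  have fbint: "integrable (lebesgue_on {0..T}) fb"
    by (rule integrable_cong_AE_imp[OF fint borel_on[OF fb]]) (rule AE_sub[OF ae], use T in auto)
  have "integrable lebesgue (\<lambda>x. indicator {0..T} x *\<^sub>R fb x)"
    using fbint by (subst (asm) integrable_restrict_space) auto
  then have fTint: "integrable lborel fT"
    unfolding fT_def by (subst (asm) integrable_completion) (use fTb[unfolded fT_def] in \<open>auto simp: measurable_lborel1\<close>)
  have Fheq: "Fh x = integral\<^sup>L (lebesgue_on {0..x}) fb" if "x \<in> {0..T}" for x
  proof -
    have "Fh x = integral\<^sup>L (lebesgue_on {0..x}) (\<lambda>v. f v * 1)" using Fh[OF that] by simp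
    also have "\<dots> = integral\<^sup>L (lebesgue_on {0..x}) (\<lambda>v. fb v * 1)"
      by (rule int_cong_fb[OF f fb ae]) (use that T in auto)
    finally show ?thesis by simp
  qed
  define D where "D = {(u,t). 0 \<le> t \<and> t \<le> u \<and> u \<le> s}"
  have Dclosed: "closed D" unfolding D_def
    by (auto intro!: closed_Collect_conj closed_Collect_le continuous_intros simp: case_prod_unfold)
  have mk: "(\<lambda>(u,t). fT (u - t) * G t) \<in> borel_measurable borel"
  proof -
    have "(\<lambda>p::real\<times>real. fst p - snd p) \<in> borel_measurable borel"
      by (intro borel_measurable_continuous_onI continuous_intros)
    from measurable_compose[OF this fTb]
    have "(\<lambda>p::real\<times>real. fT (fst p - snd p)) \<in> borel_measurable borel" .
    moreover have "(\<lambda>p::real\<times>real. G (snd p)) \<in> borel_measurable borel"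
      by (rule measurable_compose[OF _ Gm]) (intro borel_measurable_continuous_onI continuous_intros)
    ultimately show ?thesis by (simp add: case_prod_unfold)
  qed
  define C where "C = (\<integral>x. \<bar>fT x\<bar> \<partial>lborel)"
  have shiftabs: "(\<integral>u. \<bar>fT (u - t)\<bar> \<partial>lborel) = C" for t
    unfolding C_def using lborel_integral_real_affine[of 1 "\<lambda>x. \<bar>fT x\<bar>" "-t"] by simp
  have shiftint: "integrable lborel (\<lambda>u. \<bar>fT (u - t)\<bar>)" for t
    using lborel_integrable_real_affine_iff[of 1 "\<lambda>x. \<bar>fT x\<bar>" "-t"] fTint by simp
  have B: "integrable (lborel \<Otimes>\<^sub>M lborel) (\<lambda>(t,u). indicator {0..s} t * \<bar>fT (u - t)\<bar>)"
  proof (rule lborel_pair.Fubini_integrable)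
    have "(\<lambda>p::real\<times>real. indicator {0..s} (fst p) * \<bar>fT (snd p - fst p)\<bar>) \<in> borel_measurable borel"
    proof -
      have "(\<lambda>p::real\<times>real. snd p - fst p) \<in> borel_measurable borel"
        by (intro borel_measurable_continuous_onI continuous_intros)
      from measurable_compose[OF this fTb]
      have "(\<lambda>p::real\<times>real. fT (snd p - fst p)) \<in> borel_measurable borel" .
      moreover have "(\<lambda>p::real\<times>real. indicator {0..s} (fst p)) \<in> borel_measurable borel"
      proof -
        have fst_m: "(\<lambda>p::real\<times>real. fst p) \<in> borel_measurable borel"
          by (intro borel_measurable_continuous_onI continuous_intros)
        have ind_m: "indicator {0..s} \<in> borel_measurable (borel::real measure)" by (rule borel_measurable_indicator) simp
        from measurable_compose[OF fst_m ind_m] show ?thesis .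
      qed
      ultimately show ?thesis by (intro borel_measurable_times borel_measurable_abs)
    qed
    then show "(\<lambda>(t,u). indicator {0..s} t * \<bar>fT (u - t)\<bar>) \<in> borel_measurable (lborel \<Otimes>\<^sub>M lborel)"
      by (simp add: lborel_prod case_prod_unfold measurable_lborel1)
    have "(\<lambda>t. \<integral>u. norm ((\<lambda>(t,u). indicator {0..s} t * \<bar>fT (u - t)\<bar>) (t, u)) \<partial>lborel)
        = (\<lambda>t. indicator {0..s} t *\<^sub>R C)"
      by (rule ext) (simp add: abs_mult shiftabs)
    moreover have "integrable lborel (\<lambda>t. indicator {0..s} t *\<^sub>R C)"
      by (rule borel_integrable_compact) auto
    ultimately show "integrable lborel (\<lambda>t. \<integral>u. norm ((\<lambda>(t,u). indicator {0..s} t * \<bar>fT (u - t)\<bar>) (t, u)) \<partial>lborel)"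
      by simp
    show "AE t in lborel. integrable lborel (\<lambda>u. (\<lambda>(t,u). indicator {0..s} t * \<bar>fT (u - t)\<bar>) (t, u))"
      by (auto intro!: integrable_mult_right shiftint)
  qed
  from lborel_pair.integrable_product_swap[OF B]
  have B2: "integrable lborel (\<lambda>(u,t). indicator {0..s} t * \<bar>fT (u - t)\<bar>)"
    by (simp add: lborel_prod case_prod_unfold)
  have int: "integrable lborel (\<lambda>(u,t). indicator D (u,t) * (fT (u - t) * G t))"
  proof (rule Bochner_Integration.integrable_bound)
    show "integrable lborel (\<lambda>p. M * (case p of (u,t) \<Rightarrow> indicator {0..s} t * \<bar>fT (u - t)\<bar>))"
      by (rule integrable_mult_right[OF B2])
    have "(\<lambda>(u,t). indicator D (u,t) * (fT (u - t) * G t)) \<in> borel_measurable borel"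
      using mk Dclosed by (auto intro!: borel_measurable_times borel_measurable_indicator borel_closed
          simp: case_prod_unfold)
    then show "(\<lambda>(u,t). indicator D (u,t) * (fT (u - t) * G t)) \<in> borel_measurable lborel"
      by (simp add: measurable_lborel1)
    show "AE p in lborel. norm ((\<lambda>(u,t). indicator D (u,t) * (fT (u - t) * G t)) p)
        \<le> norm (M * (case p of (u,t) \<Rightarrow> indicator {0..s} t * \<bar>fT (u - t)\<bar>))"
    proof (rule AE_I2, clarify)
      fix u t :: real
      have M0: "M \<ge> 0" using Gb[of 0] by simp
      have "\<bar>indicator D (u,t) * (fT (u - t) * G t)\<bar> \<le> indicator {0..s} t * \<bar>fT (u - t)\<bar> * M"
        using Gb[of t] M0 by (auto simp: D_def indicator_def abs_mult mult_left_mono)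
      then show "norm (indicator D (u,t) * (fT (u - t) * G t)) \<le> norm (M * (indicator {0..s} t * \<bar>fT (u - t)\<bar>))"
        using M0 by (simp add: abs_mult mult_ac)
    qed
  qed
  have swap: "integral\<^sup>L (lebesgue_on {0..s}) (\<lambda>u. integral\<^sup>L (lebesgue_on {0..u}) (\<lambda>t. fT (u - t) * G t))
       = integral\<^sup>L (lebesgue_on {0..s}) (\<lambda>t. integral\<^sup>L (lebesgue_on {t..s}) (\<lambda>u. fT (u - t) * G t))"
    by (rule tri_swap_gen[OF mk]) (use int in \<open>simp add: D_def\<close>)
  have lhs: "integral\<^sup>L (lebesgue_on {0..s}) (\<lambda>u. integral\<^sup>L (lebesgue_on {0..u}) (\<lambda>t. fT (u - t) * G t))
       = integral\<^sup>L (lebesgue_on {0..s}) (\<lambda>u. conv f G u)"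
  proof (intro Bochner_Integration.integral_cong refl)
    fix u assume "u \<in> space (lebesgue_on {0..s})"
    then have u: "0 \<le> u" "u \<le> s" by auto
    have "integral\<^sup>L (lebesgue_on {0..u}) (\<lambda>t. fT (u - t) * G t) = conv fT G u" unfolding conv_def ..
    also have "\<dots> = conv fb G u" by (rule conv_cong) (use u s in \<open>auto simp: fT_def\<close>)
    also have "\<dots> = conv f G u" by (rule conv_fb[symmetric, OF f fb ae G]) (use u s T in auto)
    finally show "integral\<^sup>L (lebesgue_on {0..u}) (\<lambda>t. fT (u - t) * G t) = conv f G u" .
  qed
  have rhs: "integral\<^sup>L (lebesgue_on {0..s}) (\<lambda>t. integral\<^sup>L (lebesgue_on {t..s}) (\<lambda>u. fT (u - t) * G t))
       = conv Fh G s"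
    unfolding conv_def
  proof (intro Bochner_Integration.integral_cong refl)
    fix t assume "t \<in> space (lebesgue_on {0..s})"
    then have t: "0 \<le> t" "t \<le> s" by auto
    have "integral\<^sup>L (lebesgue_on {t..s}) (\<lambda>u. fT (u - t) * G t) = integral\<^sup>L (lebesgue_on {0..s-t}) (\<lambda>v. fT v * G t)"
      by (subst int_shift[of _ _ _ t]) simp
    also have "\<dots> = integral\<^sup>L (lebesgue_on {0..s-t}) fT * G t" by simp
    also have "integral\<^sup>L (lebesgue_on {0..s-t}) fT = integral\<^sup>L (lebesgue_on {0..s-t}) fb"
      by (intro Bochner_Integration.integral_cong refl) (use t s in \<open>auto simp: fT_def\<close>)
    also have "\<dots> = Fh (s - t)" by (rule Fheq[symmetric]) (use t s in auto)
    finally show "integral\<^sup>L (lebesgue_on {t..s}) (\<lambda>u. fT (u - t) * G t) = Fh (s - t) * G t" .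
  qed
  show ?thesis using swap lhs rhs by simp
qed


lemma AE_reflect:
  assumes "AE v in lebesgue_on {0..x}. P v"
  shows "AE t in lebesgue_on {0..x::real}. P (x - t)"
proof -
  have "AE v in lebesgue. v \<in> {0..x} \<longrightarrow> P v"
    using assms by (subst (asm) AE_restrict_space_iff) auto
  then have "AE v in lborel. v \<in> {0..x} \<longrightarrow> P v" by (simp add: AE_completion_iff)
  then obtain N where N0: "{v \<in> space lborel. \<not> (v \<in> {0..x} \<longrightarrow> P v)} \<subseteq> N"
    "emeasure lborel N = 0" "N \<in> sets lborel"
    by (rule AE_E)
  then have N: "N \<in> null_sets lborel" "{v \<in> space lborel. \<not> (v \<in> {0..x} \<longrightarrow> P v)} \<subseteq> N"
    by (auto intro: null_setsI)
  have "AE v in lborel. v \<notin> N" using N(1) by (rule AE_not_in)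
  then have "AE t in lborel. x + (-1) * t \<notin> N"
    by (rule AE_borel_affine[rotated 2]) (use N(1) in auto)
  then have "AE t in lborel. t \<in> {0..x} \<longrightarrow> P (x - t)"
  proof eventually_elim
    case (elim t)
    show ?case
    proof
      assume t: "t \<in> {0..x}"
      then have xt: "x - t \<in> {0..x}" by auto
      show "P (x - t)"
      proof (rule ccontr)
        assume "\<not> P (x - t)"
        then have "x - t \<in> N" using N(2) xt by auto
        with elim show False by simp
      qed
    qed
  qed
  then have "AE t in lebesgue. t \<in> {0..x} \<longrightarrow> P (x - t)" by (rule AE_completion)
  then show ?thesis by (subst AE_restrict_space_iff) auto
qed

lemma AE_lift:
  assumes "AE v in lebesgue_on {0..a}. P v"
  shows "AE v in lebesgue_on {0..x::real}. v \<in> {0..a} \<longrightarrow> P v"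
proof -
  have "AE v in lebesgue. v \<in> {0..a} \<longrightarrow> P v"
    using assms by (subst (asm) AE_restrict_space_iff) auto
  then show ?thesis by (subst AE_restrict_space_iff) (auto elim: eventually_mono)
qed

lemma Vop_of_real: "Vop f (\<lambda>t. complex_of_real (\<phi> t)) x = complex_of_real (conv f \<phi> x)"
  unfolding Vop_def conv_def by (simp flip: of_real_mult)

lemma conv_one: "conv g (\<lambda>_. 1) t = integral\<^sup>L (lebesgue_on {0..t}) g"
  unfolding conv_def by (subst int_reflect) simp

lemma Vop_one: "Vop g (\<lambda>_. 1) t = complex_of_real (integral\<^sup>L (lebesgue_on {0..t}) g)"
  using Vop_of_real[of g "\<lambda>_. 1" t] by (simp add: conv_one)

lemma L2_one: "L2 (\<lambda>_. 1)"
  unfolding L2_def by (auto intro!: continuous_imp_integrable_real)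

lemma fzero:
  fixes f fb :: "real \<Rightarrow> real"
  assumes f: "f \<in> borel_measurable (lebesgue_on {0..1})" and fb: "fb \<in> borel_measurable borel"
    and ae: "AE x in lebesgue_on {0..1}. f x = fb x"
    and fint: "integrable (lebesgue_on {0..T}) f" and T: "T \<le> 1"
    and c: "0 \<le> c" "c \<le> T"
    and z: "\<And>x. 0 \<le> x \<Longrightarrow> x < c \<Longrightarrow> integral\<^sup>L (lebesgue_on {0..x}) f = 0"
  shows "AE x in lebesgue_on {0..c}. f x = 0"
proof -
  define Fr where "Fr x = integral\<^sup>L (lebesgue_on {0..x}) f" for x
  have cF: "continuous_on {0..T} Fr" unfolding Fr_def by (rule indefinite_integral_continuous_real[OF fint])
  have Fz: "Fr x = 0" if "x \<in> {0..c}" for x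
  proof (cases "x < c")
    case True then show ?thesis using z that by (simp add: Fr_def)
  next
    case False
    then have xc: "x = c" using that by simp
    show ?thesis
    proof (cases "c = 0")
      case True then show ?thesis using xc int_lebesgue_on_point[of 0 f] by (simp add: Fr_def)
    next
      case False
      then have c0: "c > 0" using c by simp
      have cc: "continuous_on (closure {0..<c}) Fr" using c0 c by (intro continuous_on_subset[OF cF]) auto
      have xcl: "x \<in> closure {0..<c}" using xc c0 by simp
      show ?thesis by (rule continuous_constant_on_closure[OF cc _ xcl]) (use z in \<open>auto simp: Fr_def\<close>)
    qed
  qed
  have Fb: "Fr x = integral\<^sup>L (lebesgue_on {0..x}) fb" if "x \<in> {0..T}" for x
  proof -
    have "Fr x = integral\<^sup>L (lebesgue_on {0..x}) (\<lambda>v. f v * 1)" by (simp add: Fr_def)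
    also have "\<dots> = integral\<^sup>L (lebesgue_on {0..x}) (\<lambda>v. fb v * 1)"
      by (rule int_cong_fb[OF f fb ae]) (use that T in auto)
    finally show ?thesis by simp
  qed
  define \<phi> where "\<phi> x = indicator {0..c} x * fb x" for x
  have ind_m: "indicator {0..c} \<in> borel_measurable (borel::real measure)" by (rule borel_measurable_indicator) simp
  have \<phi>m: "\<phi> \<in> borel_measurable borel" unfolding \<phi>_def by (rule borel_measurable_times[OF ind_m fb])
  have fbint: "integrable (lebesgue_on {0..c}) fb"
  proof (rule integrable_cong_AE_imp[OF _ borel_on[OF fb]])
    show "integrable (lebesgue_on {0..c}) f"
      by (rule integrable_subinterval[OF fint]) (use c in auto)
    show "AE x in lebesgue_on {0..c}. f x = fb x" by (rule AE_sub[OF ae]) (use c T in auto)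
  qed
  have "integrable lebesgue (\<lambda>x. indicator {0..c} x *\<^sub>R fb x)"
    using fbint by (subst (asm) integrable_restrict_space) auto
  then have \<phi>int: "integrable lborel \<phi>"
    unfolding \<phi>_def by (subst (asm) integrable_completion) (use \<phi>m[unfolded \<phi>_def] in \<open>auto simp: measurable_lborel1\<close>)
  have "AE x in lborel. \<phi> x = 0"
  proof (rule zero_AE[OF \<phi>m \<phi>int])
    fix x :: real
    show "(\<integral>y. indicator {..x} y * \<phi> y \<partial>lborel) = 0"
    proof (cases "x < 0")
      case True
      show ?thesis
        by (rule integral_eq_zero_AE, rule AE_I2) (use True in \<open>auto simp: \<phi>_def indicator_def\<close>)
    next
      case False
      have "(\<integral>y. indicator {..x} y * \<phi> y \<partial>lborel) = (\<integral>y. indicator {0..min x c} y * fb y \<partial>lborel)"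
        by (intro Bochner_Integration.integral_cong refl) (use False in \<open>auto simp: \<phi>_def indicator_def\<close>)
      also have "\<dots> = integral\<^sup>L (lebesgue_on {0..min x c}) fb" by (rule lebesgue_on_Icc_lborel[symmetric, OF fb])
      also have "\<dots> = Fr (min x c)" by (rule Fb[symmetric]) (use False c in auto)
      also have "\<dots> = 0" by (rule Fz) (use False c in auto)
      finally show ?thesis .
    qed
  next
    have "(\<integral>y. \<phi> y \<partial>lborel) = integral\<^sup>L (lebesgue_on {0..c}) fb"
      unfolding \<phi>_def by (rule lebesgue_on_Icc_lborel[symmetric, OF fb])
    also have "\<dots> = Fr c" by (rule Fb[symmetric]) (use c in auto)
    also have "\<dots> = 0" by (rule Fz) (use c in auto)
    finally show "(\<integral>y. \<phi> y \<partial>lborel) = 0" .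
  qed
  then have "AE x in lebesgue. \<phi> x = 0" by (rule AE_completion)
  then have "AE x in lebesgue_on {0..c}. fb x = 0"
    by (subst AE_restrict_space_iff) (auto elim!: eventually_mono simp: \<phi>_def)
  moreover have "AE x in lebesgue_on {0..c}. f x = fb x" by (rule AE_sub[OF ae]) (use c T in auto)
  ultimately show ?thesis by eventually_elim simp
qed

lemma AE_Sup:
  fixes f :: "real \<Rightarrow> real"
  defines "A \<equiv> {a. 0 \<le> a \<and> a \<le> 1 \<and> (AE x in lebesgue_on {0..a}. f x = 0)}"
  shows "AE x in lebesgue_on {0..Sup A}. f x = 0" "0 \<le> Sup A" "Sup A \<le> 1" "\<And>a. a \<in> A \<Longrightarrow> a \<le> Sup A"
proof -
  have "AE x in lebesgue_on {0..0}. f x = 0"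
    using AE_on_neq[where u=0 and a=0 and b=0] by eventually_elim auto
  then have A0: "0 \<in> A" unfolding A_def mem_Collect_eq by simp
  have bdd: "bdd_above A" by (rule bdd_aboveI[where M=1]) (auto simp: A_def)
  show s0: "0 \<le> Sup A" by (rule cSup_upper[OF A0 bdd])
  have Ane: "A \<noteq> {}" using A0 by blast
  show "Sup A \<le> 1" by (rule cSup_least[OF Ane]) (auto simp: A_def)
  show "\<And>a. a \<in> A \<Longrightarrow> a \<le> Sup A" by (rule cSup_upper[OF _ bdd])
  define S where "S = Sup A"
  have "\<exists>a\<in>A. S - inverse (real (Suc n)) < a" for n
    unfolding S_def by (subst less_cSup_iff[symmetric, OF _ bdd]) (use A0 in auto)
  then obtain a where a: "\<And>n. a n \<in> A" "\<And>n. S - inverse (real (Suc n)) < a n" by metis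
  have "AE x in lebesgue. x \<in> {0..a n} \<longrightarrow> f x = 0" for n
  proof -
    have "AE x in lebesgue_on {0..a n}. f x = 0" using a(1)[of n] by (simp add: A_def)
    then show ?thesis by (subst (asm) AE_restrict_space_iff) auto
  qed
  then have "AE x in lebesgue. \<forall>n. x \<in> {0..a n} \<longrightarrow> f x = 0" by (subst AE_all_countable) auto
  moreover have "AE x in lebesgue. x \<noteq> S" by (rule AE_completion[OF AE_lborel_singleton])
  ultimately have "AE x in lebesgue. x \<in> {0..S} \<longrightarrow> f x = 0"
  proof eventually_elim
    case (elim x)
    show ?case
    proof
      assume x: "x \<in> {0..S}"
      with elim have "x < S" by auto
      then obtain n where "inverse (real (Suc n)) < S - x" using reals_Archimedean[of "S - x"] by auto
      then have "x \<le> a n" using a(2)[of n] by linarith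
      then show "f x = 0" using elim x by auto
    qed
  qed
  then show "AE x in lebesgue_on {0..Sup A}. f x = 0"
    unfolding S_def by (subst AE_restrict_space_iff) auto
qed


lemma clamp_cont: "continuous_on UNIV (\<lambda>x::real. max 0 (min T x))"
  by (intro continuous_intros)

lemma clamp_comp:
  assumes "continuous_on {0..T} (F :: real \<Rightarrow> real)" "0 \<le> T"
  shows "continuous_on UNIV (\<lambda>x. F (max 0 (min T x)))"
  by (rule continuous_on_compose2[OF assms(1) clamp_cont]) (use assms(2) in auto)

lemma forward_T:
  fixes f g fb gb :: "real \<Rightarrow> real"
  assumes f: "f \<in> borel_measurable (lebesgue_on {0..1})" and fb: "fb \<in> borel_measurable borel"
    and aef: "AE x in lebesgue_on {0..1}. f x = fb x"
    and fint: "integrable (lebesgue_on {0..T}) f" and gint: "integrable (lebesgue_on {0..T}) g"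
    and T: "0 < T" "T < 1"
    and aeconv: "AE x in lebesgue_on {0..1}. conv f (\<lambda>t. integral\<^sup>L (lebesgue_on {0..t}) g) x = 0"
  shows "\<exists>a b. 0 \<le> a \<and> 0 \<le> b \<and> T \<le> a + b \<and>
    (\<forall>x. 0 \<le> x \<and> x < min a T \<longrightarrow> integral\<^sup>L (lebesgue_on {0..x}) f = 0) \<and>
    (\<forall>x. 0 \<le> x \<and> x < min b T \<longrightarrow> integral\<^sup>L (lebesgue_on {0..x}) g = 0)"
proof -
  define Fr where "Fr x = integral\<^sup>L (lebesgue_on {0..x}) f" for x
  define Gr where "Gr x = integral\<^sup>L (lebesgue_on {0..x}) g" for x
  have cF: "continuous_on {0..T} Fr" unfolding Fr_def by (rule indefinite_integral_continuous_real[OF fint])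
  have cG: "continuous_on {0..T} Gr" unfolding Gr_def by (rule indefinite_integral_continuous_real[OF gint])
  define Fh where "Fh x = Fr (max 0 (min T x))" for x
  define Gh where "Gh x = Gr (max 0 (min T x))" for x
  have cFh: "continuous_on UNIV Fh" unfolding Fh_def by (rule clamp_comp[OF cF]) (use T in auto)
  have cGh: "continuous_on UNIV Gh" unfolding Gh_def by (rule clamp_comp[OF cG]) (use T in auto)
  have FhF: "Fh x = Fr x" if "x \<in> {0..T}" for x using that by (simp add: Fh_def)
  have GhG: "Gh x = Gr x" if "x \<in> {0..T}" for x using that by (simp add: Gh_def)
  have "compact (Gr ` {0..T})" by (rule compact_continuous_image[OF cG compact_Icc])
  then obtain M where M: "\<And>y. y \<in> Gr ` {0..T} \<Longrightarrow> norm y \<le> M"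
    using compact_imp_bounded bounded_iff by metis
  have Gb: "\<bar>Gh x\<bar> \<le> M" for x
    unfolding Gh_def using M[of "Gr (max 0 (min T x))"] T by auto
  have u0: "conv Fh Gh s = 0" if s: "s \<in> {0..T}" for s
  proof -
    have "conv Fh Gh s = integral\<^sup>L (lebesgue_on {0..s}) (\<lambda>u. conv f Gh u)"
      by (rule glue_conv[OF f fb aef fint _ _ cGh Gb s]) (use T in \<open>auto simp: FhF Fr_def\<close>)
    also have "\<dots> = 0"
    proof (rule integral_eq_zero_AE)
      have "AE u in lebesgue_on {0..s}. conv f Gr u = 0"
        by (rule AE_sub[OF aeconv[folded Gr_def]]) (use s T in auto)
      then show "AE u in lebesgue_on {0..s}. conv f Gh u = 0"
        using AE_space[of "lebesgue_on {0..s}"]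
      proof eventually_elim
        case (elim u)
        then have u: "0 \<le> u" "u \<le> s" by auto
        have "conv f Gh u = conv f Gr u" by (rule conv_cong) (use u s in \<open>auto simp: GhG\<close>)
        with elim show ?case by simp
      qed
    qed
    finally show ?thesis .
  qed
  obtain a b where ab: "0 \<le> a" "0 \<le> b" "T \<le> a + b" "\<forall>x. 0 \<le> x \<and> x < a \<longrightarrow> Fh x = 0"
    "\<forall>x. 0 \<le> x \<and> x < b \<longrightarrow> Gh x = 0"
    using titchmarsh_cont[OF cFh cGh T(1) u0] by blast
  have "\<forall>x. 0 \<le> x \<and> x < min a T \<longrightarrow> Fr x = 0" using ab(4) FhF by auto
  moreover have "\<forall>x. 0 \<le> x \<and> x < min b T \<longrightarrow> Gr x = 0" using ab(5) GhG by auto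
  ultimately show ?thesis using ab(1-3) unfolding Fr_def Gr_def by blast
qed


theorem mainTheorem20:
  fixes f g :: "real \<Rightarrow> real"
  assumes "f \<in> borel_measurable (lebesgue_on {0..1})"
    and "g \<in> borel_measurable (lebesgue_on {0..1})"
    and "\<forall>x\<in>{0..<1}. integrable (lebesgue_on {0..x}) f"
    and "\<forall>x\<in>{0..<1}. integrable (lebesgue_on {0..x}) g"
    and "in_AV f" and "in_AV g"
  shows "(op_zero (\<lambda>\<rho>. Vop f (Vop g \<rho>)) \<and> op_zero (Vop (conv f g))) \<longleftrightarrow>
    (\<exists>\<alpha>\<in>{0..1}. (AE x in lebesgue_on {0..\<alpha>}. f x = 0) \<and>
                 (AE x in lebesgue_on {0..1-\<alpha>}. g x = 0))"
proof
  assume H: "op_zero (\<lambda>\<rho>. Vop f (Vop g \<rho>)) \<and> op_zero (Vop (conv f g))"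
  note f = assms(1) and g = assms(2)
  obtain fb where fb: "fb \<in> borel_measurable borel" "AE x in lebesgue_on {0..1}. f x = fb x"
    using borel_version[OF f] by blast
  obtain gb where gb: "gb \<in> borel_measurable borel" "AE x in lebesgue_on {0..1}. g x = gb x"
    using borel_version[OF g] by blast
  define Gr where "Gr t = integral\<^sup>L (lebesgue_on {0..t}) g" for t
  have "AE x in lebesgue_on {0..1}. Vop f (Vop g (\<lambda>_. 1)) x = 0"
    using H L2_one unfolding op_zero_def by blast
  moreover have "Vop g (\<lambda>_. 1) = (\<lambda>t. complex_of_real (Gr t))"
    by (rule ext) (simp add: Vop_one Gr_def)
  ultimately have aeconv: "AE x in lebesgue_on {0..1}. conv f Gr x = 0"
    by (simp add: Vop_of_real)
  define Af where "Af = {a. 0 \<le> a \<and> a \<le> 1 \<and> (AE x in lebesgue_on {0..a}. f x = 0)}"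
  define Ag where "Ag = {a. 0 \<le> a \<and> a \<le> 1 \<and> (AE x in lebesgue_on {0..a}. g x = 0)}"
  note SF = AE_Sup[where f=f, folded Af_def] and SG = AE_Sup[where f=g, folded Ag_def]
  define \<alpha> where "\<alpha> = Sup Af"
  define \<beta> where "\<beta> = Sup Ag"
  have a0: "0 \<le> \<alpha>" "\<alpha> \<le> 1" unfolding \<alpha>_def by (rule SF(2), rule SF(3))
  have b0: "0 \<le> \<beta>" "\<beta> \<le> 1" unfolding \<beta>_def by (rule SG(2), rule SG(3))
  have AEf: "AE x in lebesgue_on {0..\<alpha>}. f x = 0" unfolding \<alpha>_def by (rule SF(1))
  have AEg: "AE x in lebesgue_on {0..\<beta>}. g x = 0" unfolding \<beta>_def by (rule SG(1))
  have ab1: "1 \<le> \<alpha> + \<beta>"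
  proof (rule ccontr)
    assume "\<not> 1 \<le> \<alpha> + \<beta>"
    define T where "T = (\<alpha> + \<beta> + 1) / 2"
    have Tb: "0 < T" "T < 1" using a0 b0 \<open>\<not> 1 \<le> \<alpha> + \<beta>\<close> by (simp_all add: T_def)
    have fint: "integrable (lebesgue_on {0..T}) f" using assms(3) Tb by auto
    have gint: "integrable (lebesgue_on {0..T}) g" using assms(4) Tb by auto
    obtain a b where ab: "0 \<le> a" "0 \<le> b" "T \<le> a + b"
      "\<forall>x. 0 \<le> x \<and> x < min a T \<longrightarrow> integral\<^sup>L (lebesgue_on {0..x}) f = 0"
      "\<forall>x. 0 \<le> x \<and> x < min b T \<longrightarrow> integral\<^sup>L (lebesgue_on {0..x}) g = 0"
      using forward_T[OF f fb(1) fb(2) fint gint Tb aeconv[unfolded Gr_def]] by blast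
    have "AE x in lebesgue_on {0..min a T}. f x = 0"
      by (rule fzero[OF f fb(1) fb(2) fint]) (use Tb ab in auto)
    then have "min a T \<in> Af" using ab Tb by (auto simp: Af_def)
    then have c1: "min a T \<le> \<alpha>" unfolding \<alpha>_def by (rule SF(4))
    have "AE x in lebesgue_on {0..min b T}. g x = 0"
      by (rule fzero[OF g gb(1) gb(2) gint]) (use Tb ab in auto)
    then have "min b T \<in> Ag" using ab Tb by (auto simp: Ag_def)
    then have c2: "min b T \<le> \<beta>" unfolding \<beta>_def by (rule SG(4))
    have "T \<le> min a T + min b T" using ab Tb by (auto simp: min_def)
    then have "T \<le> \<alpha> + \<beta>" using c1 c2 by linarith
    then show False using \<open>\<not> 1 \<le> \<alpha> + \<beta>\<close> by (simp add: T_def)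
  qed
  show "\<exists>\<alpha>\<in>{0..1}. (AE x in lebesgue_on {0..\<alpha>}. f x = 0) \<and> (AE x in lebesgue_on {0..1-\<alpha>}. g x = 0)"
  proof (intro bexI conjI)
    show "\<alpha> \<in> {0..1}" using a0 by simp
    show "AE x in lebesgue_on {0..\<alpha>}. f x = 0" by (rule AEf)
    show "AE x in lebesgue_on {0..1-\<alpha>}. g x = 0"
      by (rule AE_sub[OF AEg]) (use ab1 in auto)
  qed
next
  assume "\<exists>\<alpha>\<in>{0..1}. (AE x in lebesgue_on {0..\<alpha>}. f x = 0) \<and> (AE x in lebesgue_on {0..1-\<alpha>}. g x = 0)"
  then obtain \<alpha> where al: "\<alpha> \<in> {0..1}" and Af: "AE x in lebesgue_on {0..\<alpha>}. f x = 0"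
    and Ag: "AE x in lebesgue_on {0..1-\<alpha>}. g x = 0" by blast
  have Vg: "Vop g \<rho> t = 0" if t: "t \<in> {0..1-\<alpha>}" for \<rho> t
  proof -
    have "AE v in lebesgue_on {0..t}. g v = 0" by (rule AE_sub[OF Ag]) (use t in auto)
    then have "AE s in lebesgue_on {0..t}. g (t - s) = 0" by (rule AE_reflect)
    then have "AE s in lebesgue_on {0..t}. complex_of_real (g (t - s)) * \<rho> s = 0"
      by eventually_elim simp
    then show ?thesis unfolding Vop_def by (rule integral_eq_zero_AE)
  qed
  have Vfg: "Vop f (Vop g \<rho>) x = 0" if x: "x \<in> {0..1}" for \<rho> x
  proof -
    have "AE t in lebesgue_on {0..x}. x - t \<in> {0..\<alpha>} \<longrightarrow> f (x - t) = 0"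
      by (rule AE_reflect[OF AE_lift[OF Af]])
    then have "AE t in lebesgue_on {0..x}. complex_of_real (f (x - t)) * Vop g \<rho> t = 0"
      using AE_space[of "lebesgue_on {0..x}"]
    proof eventually_elim
      case (elim t)
      then have t: "0 \<le> t" "t \<le> x" by auto
      show ?case
      proof (cases "x - t \<le> \<alpha>")
        case True then show ?thesis using elim t by simp
      next
        case False
        then have "t \<in> {0..1-\<alpha>}" using t x by auto
        then show ?thesis using Vg by simp
      qed
    qed
    then show ?thesis unfolding Vop_def[of f] by (rule integral_eq_zero_AE)
  qed
  have cfg: "conv f g x = 0" if x: "x \<in> {0..1}" for x
  proof -
    have "AE t in lebesgue_on {0..x}. x - t \<in> {0..\<alpha>} \<longrightarrow> f (x - t) = 0"
      by (rule AE_reflect[OF AE_lift[OF Af]])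
    moreover have "AE t in lebesgue_on {0..x}. t \<in> {0..1-\<alpha>} \<longrightarrow> g t = 0"
      by (rule AE_lift[OF Ag])
    ultimately have "AE t in lebesgue_on {0..x}. f (x - t) * g t = 0"
      using AE_space[of "lebesgue_on {0..x}"]
    proof eventually_elim
      case (elim t)
      then have t: "0 \<le> t" "t \<le> x" by auto
      show ?case
      proof (cases "x - t \<le> \<alpha>")
        case True then show ?thesis using elim t by simp
      next
        case False
        then have "t \<in> {0..1-\<alpha>}" using t x by auto
        then show ?thesis using elim by simp
      qed
    qed
    then show ?thesis unfolding conv_def by (rule integral_eq_zero_AE)
  qed
  have Vc: "Vop (conv f g) \<rho> x = 0" if x: "x \<in> {0..1}" for \<rho> x
  proof -
    have "AE t in lebesgue_on {0..x}. complex_of_real (conv f g (x - t)) * \<rho> t = 0"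
      using AE_space[of "lebesgue_on {0..x}"]
    proof eventually_elim
      case (elim t)
      then have "x - t \<in> {0..1}" using x by auto
      then show ?case using cfg by simp
    qed
    then show ?thesis unfolding Vop_def by (rule integral_eq_zero_AE)
  qed
  show "op_zero (\<lambda>\<rho>. Vop f (Vop g \<rho>)) \<and> op_zero (Vop (conv f g))"
    unfolding op_zero_def
  proof (intro conjI allI impI)
    fix \<rho> :: "real \<Rightarrow> complex"
    show "AE x in lebesgue_on {0..1}. Vop f (Vop g \<rho>) x = 0"
      using AE_space[of "lebesgue_on {0..1}"] by eventually_elim (use Vfg in auto)
    show "AE x in lebesgue_on {0..1}. Vop (conv f g) \<rho> x = 0"
      using AE_space[of "lebesgue_on {0..1}"] by eventually_elim (use Vc in auto)
  qed
qed


end
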